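(* Let $N\ge2$, $\Omega=\mathbb{R}^{N-1}\times(0,\infty)$, $\epsilon>0$, $\delta>0$, $k\ge0$. Let $u$ be a bounded classical solution of problem (HDD) (if $k>0$) or of problem (HD) (if $k=0$) with zero initial data $\phi\equiv0$ in $\Omega$, $\psi\equiv0$ on $\partial\Omega$. Assume that for every $T\in(0,\infty)$ there exists $\gamma>0$ such that \[\int_0^T\int_{B^+_R(0)\setminus B^+_{R/2}(0)}u^2\,dx\,dt+\int_0^T\int_{B'_R(0)\setminus B'_{R/2}(0)}u^2\,d\sigma(x)\,dt\le\exp(\gamma R^2)\quad\text{for all }R>1.\] Then $u\equiv0$ in $\overline\Omega\times(0,\infty)$.
   Context: $x=(x',x_N)$, $\partial\Omega\cong\mathbb{R}^{N-1}$ with surface measure $d\sigma$, $\Delta'$ the Laplacian in $x'$. $B^+_r(x)=\{y\in\Omega:|x-y|<r\}$, $B'_r(x)=\{y\in\partial\Omega:|x-y|<r\}$. Problem (HDD): $\epsilon\partial_tu-\Delta u=0$ in $\Omega\times(0,\infty)$; $\delta\partial_tu-k\Delta'u-\partial_{x_N}u=0$ on $\partial\Omega\times(0,\infty)$; $u=\phi$ in $\Omega\times\{0\}$; $u=\psi$ on $\partial\Omega\times\{0\}$; (HD) is the same with $k=0$. A classical solution of (HDD) is $u$ on $\overline\Omega\times[0,\infty)$ with $u\in C^{2;1}(\overline\Omega\times(0,\infty))\cap C(\Omega\times[0,\infty))$, $u|_{\partial\Omega}\in C(\partial\Omega\times[0,\infty))$, satisfying the equations pointwise; a classical solution of (HD)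 is $u$ with $u\in C^{2;1}(\Omega\times(0,\infty))\cap C^{1;1}(\overline\Omega\times(0,\infty))\cap C(\Omega\times[0,\infty))$, $u|_{\partial\Omega}\in C(\partial\Omega\times[0,\infty))$, satisfying the equations pointwise. *)

theory Defs
  imports "HOL-Analysis.Analysis"
begin

text \<open>Points of the closed half-space are pairs (x', x_N) with x' in 'a (= R^(N-1)).
  Omega = {x_N > 0}, its closure = {x_N >= 0}, boundary = {x_N = 0} identified with 'a.\<close>

definition Omega :: "('a::euclidean_space \<times> real) set" where
  "Omega = {x. snd x > 0}"

definition Omega_cl :: "('a::euclidean_space \<times> real) set" where
  "Omega_cl = {x. snd x \<ge> 0}"

definition lap :: "('a::euclidean_space \<Rightarrow>\<^sub>L ('a \<Rightarrow>\<^sub>L real)) \<Rightarrow> real" where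
  "lap H = (\<Sum>b\<in>Basis. blinfun_apply (blinfun_apply H b) b)"

definition lap_tan :: "(('a::euclidean_space \<times> real) \<Rightarrow>\<^sub>L (('a \<times> real) \<Rightarrow>\<^sub>L real)) \<Rightarrow> real" where
  "lap_tan H = (\<Sum>b\<in>Basis. blinfun_apply (blinfun_apply H (b, 0)) (b, 0))"

definition classical_HDD ::
  "real \<Rightarrow> real \<Rightarrow> real \<Rightarrow> (('a::euclidean_space \<times> real) \<Rightarrow> real \<Rightarrow> real)
   \<Rightarrow> (('a \<times> real) \<Rightarrow> real) \<Rightarrow> ('a \<Rightarrow> real) \<Rightarrow> bool" where
  "classical_HDD eps delta k u phi psi \<longleftrightarrow>
    (\<exists>Du D2u ut.
      \<comment> \<open>u in C^{2;1}(closure Omega x (0,inf))\<close>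
      (\<forall>x\<in>Omega_cl. \<forall>t>0.
          ((\<lambda>y. u y t) has_derivative blinfun_apply (Du x t)) (at x within Omega_cl) \<and>
          ((\<lambda>y. Du y t) has_derivative blinfun_apply (D2u x t)) (at x within Omega_cl) \<and>
          ((\<lambda>s. u x s) has_real_derivative ut x t) (at t)) \<and>
      continuous_on (Omega_cl \<times> {0<..}) (\<lambda>(x, t). u x t) \<and>
      continuous_on (Omega_cl \<times> {0<..}) (\<lambda>(x, t). Du x t) \<and>
      continuous_on (Omega_cl \<times> {0<..}) (\<lambda>(x, t). D2u x t) \<and>
      continuous_on (Omega_cl \<times> {0<..}) (\<lambda>(x, t). ut x t) \<and>
      \<comment> \<open>u in C(Omega x [0,inf)), u restricted to boundary in C(boundary x [0,inf))\<close>
      continuous_on (Omega \<times> {0..}) (\<lambda>(x, t). u x t) \<and>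
      continuous_on (UNIV \<times> {0..}) (\<lambda>(y, t). u (y, 0) t) \<and>
      \<comment> \<open>equations\<close>
      (\<forall>x\<in>Omega. \<forall>t>0. eps * ut x t - lap (D2u x t) = 0) \<and>
      (\<forall>y. \<forall>t>0. delta * ut (y, 0) t - k * lap_tan (D2u (y, 0) t)
                   - blinfun_apply (Du (y, 0) t) (0, 1) = 0) \<and>
      (\<forall>x\<in>Omega. u x 0 = phi x) \<and>
      (\<forall>y. u (y, 0) 0 = psi y))"

definition classical_HD ::
  "real \<Rightarrow> real \<Rightarrow> (('a::euclidean_space \<times> real) \<Rightarrow> real \<Rightarrow> real)
   \<Rightarrow> (('a \<times> real) \<Rightarrow> real) \<Rightarrow> ('a \<Rightarrow> real) \<Rightarrow> bool" where
  "classical_HD eps delta u phi psi \<longleftrightarrow>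
    (\<exists>Du D2u ut.
      \<comment> \<open>u in C^{1;1}(closure Omega x (0,inf))\<close>
      (\<forall>x\<in>Omega_cl. \<forall>t>0.
          ((\<lambda>y. u y t) has_derivative blinfun_apply (Du x t)) (at x within Omega_cl) \<and>
          ((\<lambda>s. u x s) has_real_derivative ut x t) (at t)) \<and>
      continuous_on (Omega_cl \<times> {0<..}) (\<lambda>(x, t). u x t) \<and>
      continuous_on (Omega_cl \<times> {0<..}) (\<lambda>(x, t). Du x t) \<and>
      continuous_on (Omega_cl \<times> {0<..}) (\<lambda>(x, t). ut x t) \<and>
      \<comment> \<open>u in C^{2;1}(Omega x (0,inf))\<close>
      (\<forall>x\<in>Omega. \<forall>t>0.
          ((\<lambda>y. Du y t) has_derivative blinfun_apply (D2u x t)) (at x)) \<and>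
      continuous_on (Omega \<times> {0<..}) (\<lambda>(x, t). D2u x t) \<and>
      \<comment> \<open>continuity up to t = 0\<close>
      continuous_on (Omega \<times> {0..}) (\<lambda>(x, t). u x t) \<and>
      continuous_on (UNIV \<times> {0..}) (\<lambda>(y, t). u (y, 0) t) \<and>
      \<comment> \<open>equations\<close>
      (\<forall>x\<in>Omega. \<forall>t>0. eps * ut x t - lap (D2u x t) = 0) \<and>
      (\<forall>y. \<forall>t>0. delta * ut (y, 0) t - blinfun_apply (Du (y, 0) t) (0, 1) = 0) \<and>
      (\<forall>x\<in>Omega. u x 0 = phi x) \<and>
      (\<forall>y. u (y, 0) 0 = psi y))"

end

theory Submission
  imports Defs
begin

lemma time_max:
  fixes g h :: "real \<Rightarrow> real"
  assumes "(g has_real_derivative g') (at t)" "(h has_real_derivative h') (at t)" "d > 0"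
    "\<forall>s. t - d < s \<and> s \<le> t \<longrightarrow> g s - h s \<le> g t - h t"
  shows "h' \<le> g'"
proof (rule ccontr)
  assume "\<not> h' \<le> g'"
  have D: "((\<lambda>s. g s - h s) has_real_derivative (g' - h')) (at t)"
    using assms(1,2) by (intro derivative_intros)
  obtain e where e: "e > 0" "\<forall>r>0. r < e \<longrightarrow> g t - h t < g (t - r) - h (t - r)"
    using DERIV_neg_dec_left[OF D] \<open>\<not> h' \<le> g'\<close> by force
  define r where "r = min e d / 2"
  have "r > 0" "r < e" "r < d" using e assms(3) by (auto simp: r_def)
  then have "g (t - r) - h (t - r) \<le> g t - h t" using assms(4) by auto
  with e \<open>r>0\<close> \<open>r<e\<close> show False by force
qed

lemma second_order_max:
  fixes \<phi> \<Phi> :: "real \<Rightarrow> real"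
  assumes "d > 0" "\<forall>s. \<bar>s\<bar> < d \<longrightarrow> (\<phi> has_real_derivative \<Phi> s) (at s)"
    "(\<Phi> has_real_derivative L) (at 0)" "\<forall>s. \<bar>s\<bar> < d \<longrightarrow> \<phi> s \<le> \<phi> 0"
  shows "L \<le> 0"
proof (rule ccontr)
  assume "\<not> L \<le> 0"
  have "\<Phi> 0 = 0"
    using DERIV_local_max[of \<phi> "\<Phi> 0" 0 d] assms by auto
  obtain e where e: "e > 0" "\<forall>r>0. r < e \<longrightarrow> \<Phi> 0 < \<Phi> (0 + r)"
    using has_real_derivative_pos_inc_right[of \<Phi> L 0 UNIV] assms(3) \<open>\<not> L \<le> 0\<close> by force
  define r where "r = min e d / 2"
  have r: "r > 0" "r < e" "r < d" using e assms(1) by (auto simp: r_def)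
  have "\<exists>z>0. z < r \<and> \<phi> r - \<phi> 0 = (r - 0) * \<Phi> z"
    using r assms(2) by (intro MVT2) auto
  then obtain z where z: "z > 0" "z < r" "\<phi> r - \<phi> 0 = r * \<Phi> z" by auto
  have "\<Phi> z > 0" using e z r \<open>\<Phi> 0 = 0\<close> by force
  then have "\<phi> r - \<phi> 0 > 0" using z r by simp
  moreover have "\<phi> r \<le> \<phi> 0" using assms(4) r by auto
  ultimately show False by simp
qed

lemma line_deriv:
  fixes F :: "'x::real_normed_vector \<Rightarrow> real"
  assumes "(F has_derivative blinfun_apply D) (at (x + s *\<^sub>R b) within S)"
    "(\<lambda>r. x + r *\<^sub>R b) ` T \<subseteq> S"
  shows "((\<lambda>r. F (x + r *\<^sub>R b)) has_real_derivative (blinfun_apply D b)) (at s within T)"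
proof -
  have l: "((\<lambda>r. x + r *\<^sub>R b) has_derivative (\<lambda>r. r *\<^sub>R b)) (at s within T)"
    by (auto intro!: derivative_eq_intros)
  have "((\<lambda>r. F (x + r *\<^sub>R b)) has_derivative (\<lambda>r. blinfun_apply D (r *\<^sub>R b))) (at s within T)"
    by (rule has_derivative_in_compose[OF l]) (rule has_derivative_subset[OF assms(1) assms(2)])
  moreover have "(\<lambda>r. blinfun_apply D (r *\<^sub>R b)) = (*) (blinfun_apply D b)"
    by (auto simp: blinfun.scaleR_right)
  ultimately show ?thesis by (simp add: has_field_derivative_def)
qed

lemma line_deriv2:
  fixes DF :: "'x::real_normed_vector \<Rightarrow> ('x \<Rightarrow>\<^sub>L real)"
  assumes "(DF has_derivative blinfun_apply D2) (at (x + s *\<^sub>R b) within S)"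
    "(\<lambda>r. x + r *\<^sub>R b) ` T \<subseteq> S"
  shows "((\<lambda>r. blinfun_apply (DF (x + r *\<^sub>R b)) b) has_real_derivative
            (blinfun_apply (blinfun_apply D2 b) b)) (at s within T)"
proof -
  have l: "((\<lambda>r. x + r *\<^sub>R b) has_derivative (\<lambda>r. r *\<^sub>R b)) (at s within T)"
    by (auto intro!: derivative_eq_intros)
  have "((\<lambda>r. DF (x + r *\<^sub>R b)) has_derivative (\<lambda>r. blinfun_apply D2 (r *\<^sub>R b))) (at s within T)"
    by (rule has_derivative_in_compose[OF l]) (rule has_derivative_subset[OF assms(1) assms(2)])
  then have "((\<lambda>r. blinfun_apply (DF (x + r *\<^sub>R b)) b) has_derivative
      (\<lambda>r. blinfun_apply (blinfun_apply D2 (r *\<^sub>R b)) b)) (at s within T)"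
    by (rule bounded_linear.has_derivative[OF bounded_linear_apply_blinfun])
  moreover have "(\<lambda>r. blinfun_apply (blinfun_apply D2 (r *\<^sub>R b)) b) = (*) (blinfun_apply (blinfun_apply D2 b) b)"
    by (auto simp: blinfun.scaleR_right blinfun.scaleR_left)
  ultimately show ?thesis by (simp add: has_field_derivative_def)
qed

lemma dir1_half:
  fixes F :: "'x::real_normed_vector \<Rightarrow> real"
  assumes "(F has_derivative blinfun_apply Dx) (at x within S)" "d > 0"
    "\<forall>s. 0 \<le> s \<and> s < d \<longrightarrow> x + s *\<^sub>R b \<in> S"
    "\<forall>s. 0 \<le> s \<and> s < d \<longrightarrow> F (x + s *\<^sub>R b) - h s \<le> F x - h 0"
    "(h has_real_derivative h1) (at 0)"
  shows "blinfun_apply Dx b \<le> h1"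
proof (rule ccontr)
  assume nc: "\<not> ?thesis"
  have "((\<lambda>r. F (x + r *\<^sub>R b)) has_real_derivative (blinfun_apply Dx b)) (at 0 within {0..<d})"
    by (rule line_deriv) (use assms(1,3) in auto)
  moreover have "(h has_real_derivative h1) (at 0 within {0..<d})"
    using assms(5) by (rule has_field_derivative_at_within)
  ultimately have D: "((\<lambda>r. F (x + r *\<^sub>R b) - h r) has_real_derivative (blinfun_apply Dx b - h1)) (at 0 within {0..<d})"
    by (intro derivative_intros)
  obtain e where e: "e > 0" "\<forall>r>0. 0 + r \<in> {0..<d} \<longrightarrow> r < e \<longrightarrow>
      F (x + 0 *\<^sub>R b) - h 0 < F (x + (0 + r) *\<^sub>R b) - h (0 + r)"
    using has_real_derivative_pos_inc_right[OF D] nc by force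
  define r where "r = min e d / 2"
  have r: "r > 0" "r < e" "r < d" using e assms(2) by (auto simp: r_def)
  then show False using e(2)[rule_format, of r] assms(4)[rule_format, of r] by auto
qed

lemma dir2:
  fixes F :: "'x::real_normed_vector \<Rightarrow> real"
  assumes "\<forall>p\<in>S. (F has_derivative blinfun_apply (DF p)) (at p within S)"
    "(DF has_derivative blinfun_apply D2) (at x within S)"
    "d > 0" "\<forall>s. \<bar>s\<bar> < d \<longrightarrow> x + s *\<^sub>R b \<in> S"
    "\<forall>s. \<bar>s\<bar> < d \<longrightarrow> F (x + s *\<^sub>R b) - h s \<le> F x - h 0"
    "\<forall>s. (h has_real_derivative h1 s) (at s)" "(h1 has_real_derivative h2) (at 0)"
  shows "blinfun_apply (blinfun_apply D2 b) b \<le> h2"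
proof -
  let ?T = "{-d<..<d}"
  have img: "(\<lambda>r. x + r *\<^sub>R b) ` ?T \<subseteq> S"
  proof (rule image_subsetI)
    fix r assume "r \<in> ?T"
    then have "\<bar>r\<bar> < d" by auto
    then show "x + r *\<^sub>R b \<in> S" using assms(4) by blast
  qed
  have A: "\<forall>s. \<bar>s\<bar> < d \<longrightarrow> ((\<lambda>r. F (x + r *\<^sub>R b) - h r) has_real_derivative
       (blinfun_apply (DF (x + s *\<^sub>R b)) b - h1 s)) (at s)"
  proof (intro allI impI)
    fix s :: real assume s: "\<bar>s\<bar> < d"
    have "((\<lambda>r. F (x + r *\<^sub>R b)) has_real_derivative (blinfun_apply (DF (x + s *\<^sub>R b)) b)) (at s within ?T)"
      using line_deriv[OF assms(1)[rule_format, OF assms(4)[rule_format, OF s]] img] .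
    moreover have "s \<in> ?T" using s by auto
    ultimately have "((\<lambda>r. F (x + r *\<^sub>R b)) has_real_derivative (blinfun_apply (DF (x + s *\<^sub>R b)) b)) (at s)"
      by (simp add: at_within_open[OF _ open_greaterThanLessThan])
    then show "((\<lambda>r. F (x + r *\<^sub>R b) - h r) has_real_derivative
       (blinfun_apply (DF (x + s *\<^sub>R b)) b - h1 s)) (at s)"
      using assms(6) by (intro DERIV_diff) blast+
  qed
  have B: "((\<lambda>s. blinfun_apply (DF (x + s *\<^sub>R b)) b - h1 s) has_real_derivative
       (blinfun_apply (blinfun_apply D2 b) b - h2)) (at 0)"
  proof -
    have "((\<lambda>r. blinfun_apply (DF (x + r *\<^sub>R b)) b) has_real_derivative
            (blinfun_apply (blinfun_apply D2 b) b)) (at 0 within ?T)"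
      using line_deriv2[of DF D2 x 0 b S, OF _ img] assms(2) by simp
    then have "((\<lambda>r. blinfun_apply (DF (x + r *\<^sub>R b)) b) has_real_derivative
            (blinfun_apply (blinfun_apply D2 b) b)) (at 0)"
      using at_within_open[of 0 ?T] assms(3) by simp
    then show ?thesis using assms(7) by (rule DERIV_diff)
  qed
  have C: "\<forall>s. \<bar>s\<bar> < d \<longrightarrow> F (x + s *\<^sub>R b) - h s \<le> F (x + 0 *\<^sub>R b) - h 0"
    using assms(5) by simp
  have "blinfun_apply (blinfun_apply D2 b) b - h2 \<le> 0"
    by (rule second_order_max[OF assms(3) A B C])
  then show ?thesis by simp
qed

definition W :: "real \<Rightarrow> real \<Rightarrow> real \<Rightarrow> real \<Rightarrow> real" where
  "W eps \<tau> z T = exp ((ln \<tau> - ln T) / 2 - eps * z\<^sup>2 / (4 * T))"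

definition V :: "real \<Rightarrow> real \<Rightarrow> real \<Rightarrow> real \<Rightarrow> real" where
  "V eps \<tau> z t = W eps \<tau> z (t + \<tau>)"

definition Vt :: "real \<Rightarrow> real \<Rightarrow> real \<Rightarrow> real \<Rightarrow> real" where
  "Vt eps \<tau> z t = V eps \<tau> z t * (eps * z\<^sup>2 / (4 * (t + \<tau>)\<^sup>2) - 1 / (2 * (t + \<tau>)))"

definition Vz :: "real \<Rightarrow> real \<Rightarrow> real \<Rightarrow> real \<Rightarrow> real" where
  "Vz eps \<tau> z t = V eps \<tau> z t * (- (eps * z / (2 * (t + \<tau>))))"

definition Vzz :: "real \<Rightarrow> real \<Rightarrow> real \<Rightarrow> real \<Rightarrow> real" where
  "Vzz eps \<tau> z t = V eps \<tau> z t * ((eps * z / (2 * (t + \<tau>)))\<^sup>2 - eps / (2 * (t + \<tau>)))"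

lemma V_pos: "V eps \<tau> z t > 0" by (simp add: V_def W_def)

lemma W_deriv_T:
  assumes "T > 0"
  shows "((\<lambda>s. W eps \<tau> z s) has_real_derivative
     W eps \<tau> z T * (eps * z\<^sup>2 / (4 * T\<^sup>2) - 1 / (2 * T))) (at T)"
proof -
  have T: "T \<noteq> 0" using assms by auto
  show ?thesis
    unfolding W_def using assms
    apply (auto intro!: derivative_eq_intros)
    apply (simp add: field_simps power2_eq_square T)
    done
qed

lemma W_deriv_z:
  assumes "T > 0"
  shows "((\<lambda>z. W eps \<tau> z T) has_real_derivative
     W eps \<tau> z T * (- (eps * z / (2 * T)))) (at z)"
proof -
  have T: "T \<noteq> 0" using assms by auto
  show ?thesis
    unfolding W_def using assms
    by (auto intro!: derivative_eq_intros)
qed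

lemma V_deriv_t:
  assumes "t + \<tau> > 0"
  shows "((\<lambda>s. V eps \<tau> z s) has_real_derivative Vt eps \<tau> z t) (at t)"
proof -
  have L: "((\<lambda>s. s + \<tau>) has_real_derivative 1) (at t)" by (auto intro!: derivative_eq_intros)
  have "((\<lambda>s. W eps \<tau> z (s + \<tau>)) has_real_derivative
     W eps \<tau> z (t + \<tau>) * (eps * z\<^sup>2 / (4 * (t + \<tau>)\<^sup>2) - 1 / (2 * (t + \<tau>))) * 1) (at t)"
    using DERIV_chain2[OF W_deriv_T[OF assms, of eps \<tau> z] L] .
  then show ?thesis by (simp add: V_def Vt_def)
qed

lemma V_deriv_z:
  assumes "t + \<tau> > 0"
  shows "((\<lambda>z. V eps \<tau> z t) has_real_derivative Vz eps \<tau> z t) (at z)"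
  using W_deriv_z[OF assms, of eps \<tau> z] by (simp add: V_def Vz_def)

lemma Vz_deriv_z:
  assumes "t + \<tau> > 0"
  shows "((\<lambda>z. Vz eps \<tau> z t) has_real_derivative Vzz eps \<tau> z t) (at z)"
proof -
  have T: "t + \<tau> \<noteq> 0" using assms by auto
  have D2: "((\<lambda>z. - (eps * z / (2 * (t + \<tau>)))) has_real_derivative - (eps / (2 * (t + \<tau>)))) (at z)"
    using T by (auto intro!: derivative_eq_intros)
  have "((\<lambda>z. V eps \<tau> z t * (- (eps * z / (2 * (t + \<tau>))))) has_real_derivative
     Vz eps \<tau> z t * (- (eps * z / (2 * (t + \<tau>)))) + (- (eps / (2 * (t + \<tau>)))) * V eps \<tau> z t) (at z)"
    using DERIV_mult[OF V_deriv_z[OF assms] D2] .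
  moreover have "Vz eps \<tau> z t * (- (eps * z / (2 * (t + \<tau>)))) + (- (eps / (2 * (t + \<tau>)))) * V eps \<tau> z t
     = Vzz eps \<tau> z t"
    using assms by (simp add: Vz_def Vzz_def power2_eq_square field_simps)
  ultimately show ?thesis unfolding Vz_def by simp
qed

lemma V_heat: "eps * Vt eps \<tau> z t = Vzz eps \<tau> z t"
  by (simp add: Vt_def Vzz_def power2_eq_square algebra_simps)

definition Bar :: "real \<Rightarrow> real \<Rightarrow> real \<Rightarrow> ('a::euclidean_space \<times> real) \<Rightarrow> real \<Rightarrow> real \<Rightarrow> real
   \<Rightarrow> ('a \<times> real) \<Rightarrow> real \<Rightarrow> real" where
  "Bar eps a \<eta> c C \<beta> \<tau> x t = a + \<eta> * ((norm (x - c))\<^sup>2 + C * t) + \<beta> * V eps \<tau> (snd x) t"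

lemma Bar_line:
  assumes "inner b b = 1"
  shows "Bar eps a \<eta> c C \<beta> \<tau> (x + s *\<^sub>R b) t =
    a + \<eta> * ((norm (x - c))\<^sup>2 + 2 * s * inner (x - c) b + s\<^sup>2 + C * t) + \<beta> * V eps \<tau> (snd x + s * snd b) t"
proof -
  have "(norm (x + s *\<^sub>R b - c))\<^sup>2 = (norm (x - c))\<^sup>2 + 2 * s * inner (x - c) b + s\<^sup>2 * inner b b"
    unfolding power2_norm_eq_inner
    by (simp add: inner_add_left inner_add_right inner_diff_left inner_diff_right inner_commute
        power2_eq_square algebra_simps)
  then have N: "(norm (x + s *\<^sub>R b - c))\<^sup>2 = (norm (x - c))\<^sup>2 + 2 * s * inner (x - c) b + s\<^sup>2"
    using assms by simp
  show ?thesis unfolding Bar_def N by simp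
qed

lemma Bar_line_d1:
  assumes "t + \<tau> > 0"
  shows "((\<lambda>s. a + \<eta> * ((norm (x - c))\<^sup>2 + 2 * s * inner (x - c) b + s\<^sup>2 + C * t) + \<beta> * V eps \<tau> (snd x + s * snd b) t)
     has_real_derivative (\<eta> * (2 * inner (x - c) b + 2 * s) + \<beta> * (Vz eps \<tau> (snd x + s * snd b) t * snd b))) (at s)"
proof -
  have L: "((\<lambda>s. snd x + s * snd b) has_real_derivative snd b) (at s)"
    by (auto intro!: derivative_eq_intros)
  have "((\<lambda>s. V eps \<tau> (snd x + s * snd b) t) has_real_derivative Vz eps \<tau> (snd x + s * snd b) t * snd b) (at s)"
    using DERIV_chain2[OF V_deriv_z[OF assms] L] .
  then show ?thesis
    by (auto intro!: derivative_eq_intros simp: algebra_simps)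
qed

lemma Bar_line_d2:
  assumes "t + \<tau> > 0"
  shows "((\<lambda>s. \<eta> * (2 * inner (x - c) b + 2 * s) + \<beta> * (Vz eps \<tau> (snd x + s * snd b) t * snd b))
     has_real_derivative (2 * \<eta> + \<beta> * (Vzz eps \<tau> (snd x) t * snd b * snd b))) (at 0)"
proof -
  have L: "((\<lambda>s. snd x + s * snd b) has_real_derivative snd b) (at 0)"
    by (auto intro!: derivative_eq_intros)
  have "((\<lambda>s. Vz eps \<tau> (snd x + s * snd b) t) has_real_derivative Vzz eps \<tau> (snd x + 0 * snd b) t * snd b) (at 0)"
    using DERIV_chain2[OF Vz_deriv_z[OF assms] L] .
  then show ?thesis
    by (auto intro!: derivative_eq_intros simp: algebra_simps)
qed

lemma Bar_deriv_t:
  assumes "t + \<tau> > 0"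
  shows "((\<lambda>s. Bar eps a \<eta> c C \<beta> \<tau> x s) has_real_derivative \<eta> * C + \<beta> * Vt eps \<tau> (snd x) t) (at t)"
  unfolding Bar_def using V_deriv_t[OF assms, of eps "snd x"]
  by (auto intro!: derivative_eq_intros)

lemma sum_snd_sq: "(\<Sum>b\<in>(Basis :: ('a::euclidean_space \<times> real) set). snd b * snd b) = 1"
proof -
  have "inner ((0::'a), (1::real)) (0, 1) = (\<Sum>b\<in>Basis. inner ((0::'a), (1::real)) b * inner ((0::'a), (1::real)) b)"
    by (rule euclidean_inner)
  moreover have "\<And>b. inner ((0::'a), (1::real)) b = snd b"
    by (auto simp: inner_prod_def)
  ultimately show ?thesis by (simp add: inner_prod_def)
qed

lemma interior_contra:
  fixes u :: "('a::euclidean_space \<times> real) \<Rightarrow> real \<Rightarrow> real"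
  assumes D1: "\<forall>p\<in>Omega_cl. ((\<lambda>y. u y t) has_derivative blinfun_apply (Du p t)) (at p within Omega_cl)"
    and D2: "((\<lambda>y. Du y t) has_derivative blinfun_apply (D2u x t)) (at x within Omega_cl)"
    and Dt: "((\<lambda>s. u x s) has_real_derivative ut x t) (at t)"
    and eq: "eps * ut x t = lap (D2u x t)"
    and epspos: "eps > 0" and tpos: "t > 0" and taupos: "\<tau> > 0" and etapos: "\<eta> > 0" and betapos: "\<beta> \<ge> 0"
    and Cbig: "C * eps > 2 * DIM('a \<times> real)" and dpos: "d > 0" and ball: "ball x d \<subseteq> Omega_cl"
    and maxsp: "\<forall>y\<in>ball x d. u y t - Bar eps a \<eta> c C \<beta> \<tau> y t \<le> u x t - Bar eps a \<eta> c C \<beta> \<tau> x t"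
    and maxt: "\<forall>s. t - d < s \<and> s \<le> t \<longrightarrow> u x s - Bar eps a \<eta> c C \<beta> \<tau> x s \<le> u x t - Bar eps a \<eta> c C \<beta> \<tau> x t"
  shows False
proof -
  have tt: "t + \<tau> > 0" using tpos taupos by simp
  have time: "\<eta> * C + \<beta> * Vt eps \<tau> (snd x) t \<le> ut x t"
    by (rule time_max[OF Dt Bar_deriv_t[OF tt] dpos maxt])
  have dirs: "blinfun_apply (blinfun_apply (D2u x t) b) b \<le> 2 * \<eta> + \<beta> * (Vzz eps \<tau> (snd x) t * snd b * snd b)"
    if b: "b \<in> Basis" for b
  proof -
    have bb: "inner b b = 1" using b by simp
    have nb: "norm b = 1" using b by simp
    have line: "\<forall>s. \<bar>s\<bar> < d \<longrightarrow> x + s *\<^sub>R b \<in> Omega_cl"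
    proof (intro allI impI)
      fix s :: real assume "\<bar>s\<bar> < d"
      then have "x + s *\<^sub>R b \<in> ball x d" using nb by (simp add: dist_norm)
      then show "x + s *\<^sub>R b \<in> Omega_cl" using ball by blast
    qed
    have mx: "\<forall>s. \<bar>s\<bar> < d \<longrightarrow> u (x + s *\<^sub>R b) t - Bar eps a \<eta> c C \<beta> \<tau> (x + s *\<^sub>R b) t
        \<le> u x t - Bar eps a \<eta> c C \<beta> \<tau> (x + 0 *\<^sub>R b) t"
    proof (intro allI impI)
      fix s :: real assume "\<bar>s\<bar> < d"
      then have "x + s *\<^sub>R b \<in> ball x d" using nb by (simp add: dist_norm)
      then show "u (x + s *\<^sub>R b) t - Bar eps a \<eta> c C \<beta> \<tau> (x + s *\<^sub>R b) t
        \<le> u x t - Bar eps a \<eta> c C \<beta> \<tau> (x + 0 *\<^sub>R b) t" using maxsp by simp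
    qed
    have hfun: "(\<lambda>s. Bar eps a \<eta> c C \<beta> \<tau> (x + s *\<^sub>R b) t) =
      (\<lambda>s. a + \<eta> * ((norm (x - c))\<^sup>2 + 2 * s * inner (x - c) b + s\<^sup>2 + C * t) + \<beta> * V eps \<tau> (snd x + s * snd b) t)"
      using Bar_line[OF bb] by auto
    show ?thesis
      apply (rule dir2[where F = "\<lambda>y. u y t" and DF = "\<lambda>y. Du y t" and S = Omega_cl and d = d
          and h = "\<lambda>s. Bar eps a \<eta> c C \<beta> \<tau> (x + s *\<^sub>R b) t"
          and ?h1.0 = "\<lambda>s. \<eta> * (2 * inner (x - c) b + 2 * s) + \<beta> * (Vz eps \<tau> (snd x + s * snd b) t * snd b)"])
      using D1 apply simp
      using D2 apply simp
      using dpos apply simp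
      using line apply simp
      using mx apply simp
      unfolding hfun using Bar_line_d1[OF tt] apply blast
      by (rule Bar_line_d2[OF tt])
  qed
  have "lap (D2u x t) = (\<Sum>b\<in>Basis. blinfun_apply (blinfun_apply (D2u x t) b) b)"
    by (simp add: lap_def)
  also have "\<dots> \<le> (\<Sum>b\<in>(Basis :: ('a \<times> real) set). 2 * \<eta> + \<beta> * (Vzz eps \<tau> (snd x) t * snd b * snd b))"
    by (rule sum_mono) (rule dirs)
  also have "\<dots> = 2 * \<eta> * DIM('a \<times> real) + \<beta> * Vzz eps \<tau> (snd x) t * (\<Sum>b\<in>(Basis :: ('a \<times> real) set). snd b * snd b)"
    by (simp add: sum.distrib sum_distrib_left algebra_simps)
  also have "\<dots> = 2 * \<eta> * DIM('a \<times> real) + \<beta> * (eps * Vt eps \<tau> (snd x) t)"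
    by (simp add: sum_snd_sq V_heat)
  finally have lapb: "lap (D2u x t) \<le> 2 * \<eta> * DIM('a \<times> real) + \<beta> * (eps * Vt eps \<tau> (snd x) t)" .
  have "eps * (\<eta> * C + \<beta> * Vt eps \<tau> (snd x) t) \<le> eps * ut x t"
    using time epspos by (intro mult_left_mono) auto
  then have "\<eta> * (C * eps) \<le> \<eta> * (2 * DIM('a \<times> real))"
    using lapb eq by (simp add: algebra_simps)
  moreover have "\<eta> * (C * eps) > \<eta> * (2 * DIM('a \<times> real))"
    using Cbig etapos by (intro mult_strict_left_mono) auto
  ultimately show False by linarith
qed

lemma boundary_contra:
  fixes u :: "('a::euclidean_space \<times> real) \<Rightarrow> real \<Rightarrow> real"
  assumes D1: "\<forall>p\<in>Omega_cl. ((\<lambda>y. u y t) has_derivative blinfun_apply (Du p t)) (at p within Omega_cl)"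
    and D2b: "k > 0 \<longrightarrow> ((\<lambda>y. Du y t) has_derivative blinfun_apply (D2u x t)) (at x within Omega_cl)"
    and Dt: "((\<lambda>s. u x s) has_real_derivative ut x t) (at t)"
    and eqb: "delta * ut x t - k * lap_tan (D2u x t) - blinfun_apply (Du x t) (0, 1) = 0"
    and sx: "snd x = 0" and sc: "snd c = 0"
    and kpos: "k \<ge> 0" and deltapos: "delta > 0" and tpos: "t > 0" and taupos: "\<tau> > 0" and etapos: "\<eta> > 0"
    and Cbig: "C * delta > 2 * k * DIM('a)" and dpos: "d > 0"
    and maxsp: "\<forall>y\<in>Omega_cl \<inter> ball x d. u y t - Bar eps a \<eta> c C 0 \<tau> y t \<le> u x t - Bar eps a \<eta> c C 0 \<tau> x t"
    and maxt: "\<forall>s. t - d < s \<and> s \<le> t \<longrightarrow> u x s - Bar eps a \<eta> c C 0 \<tau> x s \<le> u x t - Bar eps a \<eta> c C 0 \<tau> x t"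
  shows False
proof -
  have tt: "t + \<tau> > 0" using tpos taupos by simp
  have time: "\<eta> * C + 0 * Vt eps \<tau> (snd x) t \<le> ut x t"
    by (rule time_max[OF Dt Bar_deriv_t[OF tt] dpos maxt])
  have xin: "x \<in> Omega_cl" using sx by (simp add: Omega_cl_def)
  have normal: "blinfun_apply (Du x t) (0, 1) \<le> 0"
  proof -
    let ?b = "((0::'a), (1::real))"
    have bb: "inner ?b ?b = 1" by (simp add: inner_prod_def)
    have line: "\<forall>s. 0 \<le> s \<and> s < d \<longrightarrow> x + s *\<^sub>R ?b \<in> Omega_cl"
      using sx by (auto simp: Omega_cl_def)
    have mx: "\<forall>s. 0 \<le> s \<and> s < d \<longrightarrow> u (x + s *\<^sub>R ?b) t - Bar eps a \<eta> c C 0 \<tau> (x + s *\<^sub>R ?b) t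
        \<le> u x t - Bar eps a \<eta> c C 0 \<tau> (x + 0 *\<^sub>R ?b) t"
    proof (intro allI impI)
      fix s :: real assume s: "0 \<le> s \<and> s < d"
      then have "x + s *\<^sub>R ?b \<in> ball x d" by (simp add: dist_norm)
      moreover have "x + s *\<^sub>R ?b \<in> Omega_cl" using line s by blast
      ultimately show "u (x + s *\<^sub>R ?b) t - Bar eps a \<eta> c C 0 \<tau> (x + s *\<^sub>R ?b) t
        \<le> u x t - Bar eps a \<eta> c C 0 \<tau> (x + 0 *\<^sub>R ?b) t" using maxsp by (simp add: zero_prod_def[symmetric])
    qed
    have hfun: "(\<lambda>s. Bar eps a \<eta> c C 0 \<tau> (x + s *\<^sub>R ?b) t) =
      (\<lambda>s. a + \<eta> * ((norm (x - c))\<^sup>2 + 2 * s * inner (x - c) ?b + s\<^sup>2 + C * t) + 0 * V eps \<tau> (snd x + s * snd ?b) t)"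
      using Bar_line[OF bb] by auto
    have "blinfun_apply (Du x t) ?b \<le> \<eta> * (2 * inner (x - c) ?b + 2 * 0) + 0 * (Vz eps \<tau> (snd x + 0 * snd ?b) t * snd ?b)"
      apply (rule dir1_half[where F = "\<lambda>y. u y t" and S = Omega_cl and d = d and x = x
          and h = "\<lambda>s. Bar eps a \<eta> c C 0 \<tau> (x + s *\<^sub>R ?b) t"])
      using D1 xin apply simp
      using dpos apply simp
      using line apply simp
      using mx apply simp
      unfolding hfun by (rule Bar_line_d1[OF tt])
    moreover have "inner (x - c) ?b = 0" using sx sc by (simp add: inner_prod_def)
    ultimately show ?thesis by simp
  qed
  have tang: "k * lap_tan (D2u x t) \<le> k * (2 * \<eta> * DIM('a))"
  proof (cases "k > 0")
    case False
    then show ?thesis using kpos etapos by simp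
  next
    case True
    have D2: "((\<lambda>y. Du y t) has_derivative blinfun_apply (D2u x t)) (at x within Omega_cl)"
      using D2b True by blast
    have dirs: "blinfun_apply (blinfun_apply (D2u x t) (b', 0)) (b', 0) \<le> 2 * \<eta>"
      if b': "b' \<in> Basis" for b' :: 'a
    proof -
      let ?b = "(b', (0::real))"
      have bb: "inner ?b ?b = 1" using b' by (simp add: inner_prod_def)
      have nb: "norm ?b = 1" using bb by (simp add: norm_eq_sqrt_inner)
      have line: "\<forall>s. \<bar>s\<bar> < d \<longrightarrow> x + s *\<^sub>R ?b \<in> Omega_cl"
        using sx by (auto simp: Omega_cl_def)
      have mx: "\<forall>s. \<bar>s\<bar> < d \<longrightarrow> u (x + s *\<^sub>R ?b) t - Bar eps a \<eta> c C 0 \<tau> (x + s *\<^sub>R ?b) t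
          \<le> u x t - Bar eps a \<eta> c C 0 \<tau> (x + 0 *\<^sub>R ?b) t"
      proof (intro allI impI)
        fix s :: real assume s: "\<bar>s\<bar> < d"
        then have "x + s *\<^sub>R ?b \<in> ball x d" using nb by (simp add: dist_norm)
        moreover have "x + s *\<^sub>R ?b \<in> Omega_cl" using line s by blast
        ultimately show "u (x + s *\<^sub>R ?b) t - Bar eps a \<eta> c C 0 \<tau> (x + s *\<^sub>R ?b) t
          \<le> u x t - Bar eps a \<eta> c C 0 \<tau> (x + 0 *\<^sub>R ?b) t" using maxsp by (simp add: zero_prod_def[symmetric])
      qed
      have hfun: "(\<lambda>s. Bar eps a \<eta> c C 0 \<tau> (x + s *\<^sub>R ?b) t) =
        (\<lambda>s. a + \<eta> * ((norm (x - c))\<^sup>2 + 2 * s * inner (x - c) ?b + s\<^sup>2 + C * t) + 0 * V eps \<tau> (snd x + s * snd ?b) t)"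
        using Bar_line[OF bb] by auto
      have "blinfun_apply (blinfun_apply (D2u x t) ?b) ?b \<le> 2 * \<eta> + 0 * (Vzz eps \<tau> (snd x) t * snd ?b * snd ?b)"
        apply (rule dir2[where F = "\<lambda>y. u y t" and DF = "\<lambda>y. Du y t" and S = Omega_cl and d = d
            and h = "\<lambda>s. Bar eps a \<eta> c C 0 \<tau> (x + s *\<^sub>R ?b) t"
            and ?h1.0 = "\<lambda>s. \<eta> * (2 * inner (x - c) ?b + 2 * s) + 0 * (Vz eps \<tau> (snd x + s * snd ?b) t * snd ?b)"])
        using D1 apply simp
        using D2 apply simp
        using dpos apply simp
        using line apply simp
        using mx apply simp
        unfolding hfun using Bar_line_d1[OF tt] apply blast
        by (rule Bar_line_d2[OF tt])
      then show ?thesis by simp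
    qed
    have "lap_tan (D2u x t) \<le> (\<Sum>b'\<in>(Basis::'a set). 2 * \<eta>)"
      unfolding lap_tan_def by (rule sum_mono) (rule dirs)
    then have "lap_tan (D2u x t) \<le> 2 * \<eta> * DIM('a)" by (simp add: algebra_simps)
    then show ?thesis using True by (intro mult_left_mono) auto
  qed
  have "delta * (\<eta> * C) \<le> delta * ut x t"
    using time deltapos by (intro mult_left_mono) auto
  then have "\<eta> * (C * delta) \<le> \<eta> * (2 * k * DIM('a))"
    using eqb tang normal by (simp add: algebra_simps)
  moreover have "\<eta> * (C * delta) > \<eta> * (2 * k * DIM('a))"
    using Cbig etapos by (intro mult_strict_left_mono) auto
  ultimately show False by linarith
qed

lemma attain:
  fixes F :: "'x::metric_space \<Rightarrow> real"
  assumes K: "compact K" and AK: "A \<subseteq> K" and cont: "continuous_on A F" and p0: "p0 \<in> A"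
    and bot: "\<forall>q\<in>K - A. \<exists>d>0. \<forall>p\<in>A. dist p q < d \<longrightarrow> F p < F p0"
  shows "\<exists>p\<in>A. \<forall>p'\<in>A. F p' \<le> F p"
proof -
  define A' where "A' = {p\<in>A. F p0 \<le> F p}"
  have cl: "closed A'"
    unfolding closed_sequential_limits
  proof (intro allI impI)
    fix xs l assume H: "(\<forall>n. xs n \<in> A') \<and> xs \<longlonglongrightarrow> l"
    then have xsA: "\<forall>n. xs n \<in> A" and xsF: "\<forall>n. F p0 \<le> F (xs n)" and lim: "xs \<longlonglongrightarrow> l"
      by (auto simp: A'_def)
    have "l \<in> K"
      using compact_imp_closed[OF K] xsA AK lim unfolding closed_sequential_limits by blast
    show "l \<in> A'"
    proof (cases "l \<in> A")
      case True
      have "(F \<circ> xs) \<longlonglongrightarrow> F l"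
        using cont True xsA lim unfolding continuous_on_sequentially by blast
      then have "F p0 \<le> F l"
        by (rule LIMSEQ_le_const) (use xsF in auto)
      then show ?thesis using True by (simp add: A'_def)
    next
      case False
      then obtain d where d: "d > 0" "\<forall>p\<in>A. dist p l < d \<longrightarrow> F p < F p0"
        using bot \<open>l \<in> K\<close> by blast
      obtain no where "\<forall>n\<ge>no. dist (xs n) l < d" using lim d(1) unfolding lim_sequentially by blast
      then have "F (xs no) < F p0" using d xsA by blast
      with xsF show ?thesis by (meson not_le)
    qed
  qed
  have "A' = K \<inter> A'" using AK by (auto simp: A'_def)
  then have cA': "compact A'" using compact_Int_closed[OF K cl] by simp
  have ne: "A' \<noteq> {}" using p0 by (auto simp: A'_def)
  have "continuous_on A' F" using cont by (rule continuous_on_subset) (auto simp: A'_def)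
  then obtain p where p: "p \<in> A'" "\<forall>y\<in>A'. F y \<le> F p"
    using continuous_attains_sup[OF cA' ne] by blast
  show ?thesis
  proof (intro bexI ballI)
    fix p' assume "p' \<in> A"
    show "F p' \<le> F p"
    proof (cases "F p0 \<le> F p'")
      case True then show ?thesis using p \<open>p' \<in> A\<close> by (auto simp: A'_def)
    next
      case False then show ?thesis using p by (auto simp: A'_def)
    qed
  qed (use p in \<open>auto simp: A'_def\<close>)
qed

lemma dist_pair_le: "dist (a, b) (c, d) \<le> dist a c + dist b d"
  unfolding dist_Pair_Pair by (rule sqrt_sum_squares_le_sum) auto

lemma open_Omega: "open (Omega :: ('a::euclidean_space \<times> real) set)"
  unfolding Omega_def by (rule open_Collect_less) (auto intro: continuous_intros)

lemma closed_Omega_cl: "closed (Omega_cl :: ('a::euclidean_space \<times> real) set)"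
  unfolding Omega_cl_def by (rule closed_Collect_le) (auto intro: continuous_intros)

lemma Omega_sub: "Omega \<subseteq> Omega_cl" by (auto simp: Omega_def Omega_cl_def)

lemma V_lower:
  assumes "0 \<le> t" "t \<le> \<tau>" "\<tau> > 0" "eps \<ge> 0" "eps * z\<^sup>2 \<le> 2 * \<tau>"
  shows "V eps \<tau> z t \<ge> exp (-1)"
proof -
  have "ln (t + \<tau>) \<le> ln (2 * \<tau>)" using assms by simp
  also have "\<dots> = ln 2 + ln \<tau>" using assms by (simp add: ln_mult)
  finally have l: "(ln \<tau> - ln (t + \<tau>)) / 2 \<ge> - 1 / 2" using ln_2_less_1 by simp
  have "eps * z\<^sup>2 / (4 * (t + \<tau>)) \<le> eps * z\<^sup>2 / (4 * \<tau>)"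
    using assms by (intro divide_left_mono) (auto intro: mult_nonneg_nonneg)
  also have "\<dots> \<le> 2 * \<tau> / (4 * \<tau>)" using assms by (intro divide_right_mono) auto
  also have "\<dots> = 1 / 2" using assms by simp
  finally have "(ln \<tau> - ln (t + \<tau>)) / 2 - eps * z\<^sup>2 / (4 * (t + \<tau>)) \<ge> -1" using l by linarith
  then show ?thesis unfolding V_def W_def by simp
qed

lemma V_upper:
  assumes "0 < t" "\<tau> > 0" "eps \<ge> 0"
  shows "V eps \<tau> z t \<le> exp ((ln \<tau> - ln t) / 2)"
proof -
  have "ln t \<le> ln (t + \<tau>)" using assms by simp
  then have A: "(ln \<tau> - ln (t + \<tau>)) / 2 \<le> (ln \<tau> - ln t) / 2" by (simp add: divide_right_mono)
  have B: "eps * z\<^sup>2 / (4 * (t + \<tau>)) \<ge> 0" using assms by simp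
  from A B have "(ln \<tau> - ln (t + \<tau>)) / 2 - eps * z\<^sup>2 / (4 * (t + \<tau>)) \<le> (ln \<tau> - ln t) / 2"
    by linarith
  then show ?thesis unfolding V_def W_def by simp
qed

lemma V_small:
  assumes "0 < t" "q > 0" "eps \<ge> 0"
  shows "V eps (t * q\<^sup>2) z t \<le> q"
proof -
  have "V eps (t * q\<^sup>2) z t \<le> exp ((ln (t * q\<^sup>2) - ln t) / 2)"
    using assms by (intro V_upper) auto
  also have "ln (t * q\<^sup>2) - ln t = 2 * ln q"
    using assms by (simp add: ln_mult ln_realpow)
  finally show ?thesis using assms by simp
qed

lemma Bar_nonneg:
  assumes "a \<ge> 0" "\<eta> \<ge> 0" "C \<ge> 0" "t \<ge> 0" "\<beta> \<ge> 0"
  shows "Bar eps a \<eta> c C \<beta> \<tau> x t \<ge> 0"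
  unfolding Bar_def using assms V_pos[of eps \<tau> "snd x" t]
  by (intro add_nonneg_nonneg mult_nonneg_nonneg) auto

lemma Bar_cont:
  assumes "\<tau> > 0"
  shows "continuous_on (UNIV \<times> {0..}) (\<lambda>(x, t). Bar eps a \<eta> c C \<beta> \<tau> x t)"
proof -
  have "continuous_on (UNIV \<times> {0..}) (\<lambda>p. a + \<eta> * ((norm (fst p - c))\<^sup>2 + C * snd p) +
     \<beta> * exp ((ln \<tau> - ln (snd p + \<tau>)) / 2 - eps * (snd (fst p))\<^sup>2 / (4 * (snd p + \<tau>))))"
    using assms
    by (intro continuous_intros) (auto simp: add_pos_nonneg)
  then show ?thesis
    by (simp add: Bar_def V_def W_def case_prod_beta)
qed

locale hsol =
  fixes u :: "('a::euclidean_space \<times> real) \<Rightarrow> real \<Rightarrow> real"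
    and Du :: "('a \<times> real) \<Rightarrow> real \<Rightarrow> (('a \<times> real) \<Rightarrow>\<^sub>L real)"
    and D2u :: "('a \<times> real) \<Rightarrow> real \<Rightarrow> (('a \<times> real) \<Rightarrow>\<^sub>L (('a \<times> real) \<Rightarrow>\<^sub>L real))"
    and ut :: "('a \<times> real) \<Rightarrow> real \<Rightarrow> real"
    and eps delta k M :: real
  assumes epspos: "eps > 0" and deltapos: "delta > 0" and kpos: "k \<ge> 0"
    and D1: "\<forall>x\<in>Omega_cl. \<forall>t>0. ((\<lambda>y. u y t) has_derivative blinfun_apply (Du x t)) (at x within Omega_cl)"
    and Dt: "\<forall>x\<in>Omega_cl. \<forall>t>0. ((\<lambda>s. u x s) has_real_derivative ut x t) (at t)"
    and D2i: "\<forall>x\<in>Omega. \<forall>t>0. ((\<lambda>y. Du y t) has_derivative blinfun_apply (D2u x t)) (at x within Omega_cl)"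
    and D2b: "k > 0 \<longrightarrow> (\<forall>y. \<forall>t>0. ((\<lambda>z. Du z t) has_derivative blinfun_apply (D2u (y, 0) t)) (at (y, 0) within Omega_cl))"
    and Cu: "continuous_on (Omega_cl \<times> {0<..}) (\<lambda>(x, t). u x t)"
    and C0: "continuous_on (Omega \<times> {0..}) (\<lambda>(x, t). u x t)"
    and Cb: "continuous_on (UNIV \<times> {0..}) (\<lambda>(y, t). u (y, 0) t)"
    and Eq: "\<forall>x\<in>Omega. \<forall>t>0. eps * ut x t - lap (D2u x t) = 0"
    and Eqb: "\<forall>y. \<forall>t>0. delta * ut (y, 0) t - k * lap_tan (D2u (y, 0) t) - blinfun_apply (Du (y, 0) t) (0, 1) = 0"
    and I0: "\<forall>x\<in>Omega. u x 0 = 0" and Ib: "\<forall>y. u (y, 0) 0 = 0"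
    and Mb: "\<forall>x\<in>Omega_cl. \<forall>t\<ge>0. \<bar>u x t\<bar> \<le> M"
begin

lemma maxp:
  fixes c :: "'a \<times> real" and a \<eta> C \<beta> \<tau> R T :: real
  assumes sc: "snd c = 0" and Rpos: "R > 0" and Tpos: "T > 0" and etapos: "\<eta> > 0" and betapos: "\<beta> \<ge> 0"
    and taupos: "\<tau> > 0" and apos: "a \<ge> 0" and Cpos: "C \<ge> 0"
    and Ce: "C * eps > 2 * DIM('a \<times> real)" and Cd: "C * delta > 2 * k * DIM('a)"
    and curved: "\<forall>x t. x \<in> Omega_cl \<and> norm (x - c) = R \<and> 0 < t \<and> t \<le> T \<longrightarrow> u x t - Bar eps a \<eta> c C \<beta> \<tau> x t \<le> 0"
    and flat: "\<beta> \<noteq> 0 \<longrightarrow> (\<forall>x t. x \<in> Omega_cl \<and> snd x = 0 \<and> norm (x - c) \<le> R \<and> 0 < t \<and> t \<le> T \<longrightarrow> u x t - Bar eps a \<eta> c C \<beta> \<tau> x t \<le> 0)"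
    and bottom: "\<forall>e>0. \<forall>x\<in>Omega_cl. norm (x - c) \<le> R \<longrightarrow> (\<exists>d>0. \<forall>y s. y \<in> Omega_cl \<and> norm (y - c) \<le> R \<and> 0 < s \<and> s \<le> T \<and> dist y x < d \<and> s < d \<longrightarrow> u y s - Bar eps a \<eta> c C \<beta> \<tau> y s < e)"
  shows "\<forall>x t. x \<in> Omega_cl \<and> norm (x - c) \<le> R \<and> 0 < t \<and> t \<le> T \<longrightarrow> u x t - Bar eps a \<eta> c C \<beta> \<tau> x t \<le> 0"
proof (rule ccontr)
  assume "\<not> ?thesis"
  then obtain x0 t0 where p0: "x0 \<in> Omega_cl" "norm (x0 - c) \<le> R" "0 < t0" "t0 \<le> T"
    and f0: "u x0 t0 - Bar eps a \<eta> c C \<beta> \<tau> x0 t0 > 0" by force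
  define f where "f = (\<lambda>p. u (fst p) (snd p) - Bar eps a \<eta> c C \<beta> \<tau> (fst p) (snd p))"
  define Bx where "Bx = Omega_cl \<inter> cball c R"
  define A where "A = Bx \<times> {0<..T}"
  define K where "K = Bx \<times> {0..T}"
  have memBx: "y \<in> Bx \<longleftrightarrow> y \<in> Omega_cl \<and> norm (y - c) \<le> R" for y
    by (simp add: Bx_def dist_norm norm_minus_commute)
  have cK: "compact K" unfolding K_def Bx_def
    by (intro compact_Times closed_Int_compact closed_Omega_cl compact_cball compact_Icc)
  have AK: "A \<subseteq> K" by (auto simp: A_def K_def)
  have contf: "continuous_on A f"
  proof -
    have "continuous_on A (\<lambda>(x, t). u x t)"
      by (rule continuous_on_subset[OF Cu]) (auto simp: A_def Bx_def)
    moreover have "continuous_on A (\<lambda>(x, t). Bar eps a \<eta> c C \<beta> \<tau> x t)"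
      by (rule continuous_on_subset[OF Bar_cont[OF taupos]]) (auto simp: A_def)
    ultimately have "continuous_on A (\<lambda>p. (\<lambda>(x, t). u x t) p - (\<lambda>(x, t). Bar eps a \<eta> c C \<beta> \<tau> x t) p)"
      by (rule continuous_on_diff)
    then show ?thesis by (simp add: f_def case_prod_beta)
  qed
  have p0A: "(x0, t0) \<in> A" using p0 by (simp add: A_def memBx)
  have bot: "\<forall>q\<in>K - A. \<exists>d>0. \<forall>p\<in>A. dist p q < d \<longrightarrow> f p < f (x0, t0)"
  proof
    fix q assume q: "q \<in> K - A"
    then have q1: "fst q \<in> Omega_cl" "norm (fst q - c) \<le> R" and q2: "snd q = 0"
      by (auto simp: K_def A_def memBx)
    have "f (x0, t0) > 0" using f0 by (simp add: f_def)
    then obtain d where d: "d > 0" and dH: "\<forall>y s. y \<in> Omega_cl \<and> norm (y - c) \<le> R \<and> 0 < s \<and> s \<le> T \<and> dist y (fst q) < d \<and> s < d \<longrightarrow> f (y, s) < f (x0, t0)"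
      using bottom[rule_format, OF \<open>f (x0, t0) > 0\<close> q1(1) q1(2)] unfolding f_def by auto
    show "\<exists>d>0. \<forall>p\<in>A. dist p q < d \<longrightarrow> f p < f (x0, t0)"
    proof (intro exI conjI ballI impI)
      fix p assume pA: "p \<in> A" and dp: "dist p q < d"
      have "dist (fst p) (fst q) < d" using dist_fst_le[of p q] dp by linarith
      moreover have "snd p < d" using dist_snd_le[of p q] dp q2 pA by (auto simp: A_def dist_real_def)
      ultimately show "f p < f (x0, t0)" using dH pA by (cases p) (auto simp: A_def memBx)
    qed (rule d)
  qed
  obtain ps where psA: "ps \<in> A" and psmax: "\<forall>p'\<in>A. f p' \<le> f ps"
    using attain[OF cK AK contf p0A bot] by blast
  obtain xs ts where ps: "ps = (xs, ts)" by (cases ps)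
  have xs: "xs \<in> Omega_cl" "norm (xs - c) \<le> R" "0 < ts" "ts \<le> T"
    using psA by (auto simp: ps A_def memBx)
  have fpos: "u xs ts - Bar eps a \<eta> c C \<beta> \<tau> xs ts > 0"
    using psmax[rule_format, OF p0A] f0 unfolding f_def ps by simp
  have maxA: "\<And>y s. y \<in> Omega_cl \<Longrightarrow> norm (y - c) \<le> R \<Longrightarrow> 0 < s \<Longrightarrow> s \<le> T \<Longrightarrow>
      u y s - Bar eps a \<eta> c C \<beta> \<tau> y s \<le> u xs ts - Bar eps a \<eta> c C \<beta> \<tau> xs ts"
  proof -
    fix y s assume "y \<in> Omega_cl" "norm (y - c) \<le> R" "0 < s" "s \<le> T"
    then have "(y, s) \<in> A" by (simp add: A_def memBx)
    then show "u y s - Bar eps a \<eta> c C \<beta> \<tau> y s \<le> u xs ts - Bar eps a \<eta> c C \<beta> \<tau> xs ts"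
      using psmax unfolding f_def ps by force
  qed
  have nR: "norm (xs - c) < R"
  proof (rule ccontr)
    assume "\<not> ?thesis"
    then have "norm (xs - c) = R" using xs by simp
    then have "u xs ts - Bar eps a \<eta> c C \<beta> \<tau> xs ts \<le> 0" using curved xs by blast
    then show False using fpos by simp
  qed
  have snn: "snd xs \<ge> 0" using xs by (simp add: Omega_cl_def)
  show False
  proof (cases "snd xs > 0")
    case True
    have xsO: "xs \<in> Omega" using True by (simp add: Omega_def)
    define d where "d = min (min (snd xs) (R - norm (xs - c))) ts"
    have dpos: "d > 0" using True nR xs by (simp add: d_def)
    have ballsub: "y \<in> Omega_cl \<and> norm (y - c) \<le> R" if "y \<in> ball xs d" for y
    proof -
      have dy: "dist xs y < d" using that by simp
      have "snd xs - snd y \<le> dist xs y"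
        using dist_snd_le[of xs y] by (simp add: dist_real_def)
      then have "snd y > 0" using dy by (simp add: d_def)
      moreover have "norm (y - c) \<le> norm (xs - c) + dist xs y"
        using norm_triangle_ineq[of "xs - c" "y - xs"] by (simp add: dist_norm norm_minus_commute)
      ultimately show ?thesis using dy by (simp add: d_def Omega_cl_def)
    qed
    show False
    proof (rule interior_contra[where u=u and Du=Du and t=ts and D2u=D2u and x=xs and ut=ut and eps=eps and \<tau>=\<tau> and \<eta>=\<eta> and \<beta>=\<beta> and C=C and d=d and a=a and c=c])
      show "\<forall>p\<in>Omega_cl. ((\<lambda>y. u y ts) has_derivative blinfun_apply (Du p ts)) (at p within Omega_cl)"
        using D1 xs by blast
      show "((\<lambda>y. Du y ts) has_derivative blinfun_apply (D2u xs ts)) (at xs within Omega_cl)"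
        using D2i xsO xs by blast
      show "((\<lambda>s. u xs s) has_real_derivative ut xs ts) (at ts)"
        using Dt xs by blast
      show "eps * ut xs ts = lap (D2u xs ts)" using Eq xsO xs by (metis eq_iff_diff_eq_0)
      show "ball xs d \<subseteq> Omega_cl" using ballsub by blast
      show "\<forall>y\<in>ball xs d. u y ts - Bar eps a \<eta> c C \<beta> \<tau> y ts \<le> u xs ts - Bar eps a \<eta> c C \<beta> \<tau> xs ts"
        using ballsub maxA xs by blast
      show "\<forall>s. ts - d < s \<and> s \<le> ts \<longrightarrow> u xs s - Bar eps a \<eta> c C \<beta> \<tau> xs s \<le> u xs ts - Bar eps a \<eta> c C \<beta> \<tau> xs ts"
      proof (intro allI impI)
        fix s assume "ts - d < s \<and> s \<le> ts"
        then have "0 < s" "s \<le> T" using xs by (auto simp: d_def)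
        then show "u xs s - Bar eps a \<eta> c C \<beta> \<tau> xs s \<le> u xs ts - Bar eps a \<eta> c C \<beta> \<tau> xs ts"
          using maxA xs by blast
      qed
    qed (use epspos xs taupos etapos betapos Ce dpos in auto)
  next
    case False
    then have sx: "snd xs = 0" using snn by simp
    have b0: "\<beta> = 0"
    proof (rule ccontr)
      assume "\<beta> \<noteq> 0"
      then have "u xs ts - Bar eps a \<eta> c C \<beta> \<tau> xs ts \<le> 0" using flat xs sx by blast
      then show False using fpos by simp
    qed
    have xseq: "xs = (fst xs, 0)" using sx by (simp add: prod_eq_iff)
    define d where "d = min (R - norm (xs - c)) ts"
    have dpos: "d > 0" using nR xs by (simp add: d_def)
    show False
    proof (rule boundary_contra[where u=u and Du=Du and t=ts and k=k and D2u=D2u and x=xs and ut=ut and delta=delta and c=c and \<tau>=\<tau> and \<eta>=\<eta> and C=C and d=d and eps=eps and a=a])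
      show "\<forall>p\<in>Omega_cl. ((\<lambda>y. u y ts) has_derivative blinfun_apply (Du p ts)) (at p within Omega_cl)"
        using D1 xs by blast
      show "k > 0 \<longrightarrow> ((\<lambda>y. Du y ts) has_derivative blinfun_apply (D2u xs ts)) (at xs within Omega_cl)"
        using D2b xs xseq by (metis (no_types, lifting))
      show "((\<lambda>s. u xs s) has_real_derivative ut xs ts) (at ts)"
        using Dt xs by blast
      show "delta * ut xs ts - k * lap_tan (D2u xs ts) - blinfun_apply (Du xs ts) (0, 1) = 0"
        using Eqb xs xseq by (metis)
      show "\<forall>y\<in>Omega_cl \<inter> ball xs d. u y ts - Bar eps a \<eta> c C 0 \<tau> y ts \<le> u xs ts - Bar eps a \<eta> c C 0 \<tau> xs ts"
      proof
        fix y assume y: "y \<in> Omega_cl \<inter> ball xs d"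
        have "norm (y - c) \<le> norm (xs - c) + dist xs y"
          using norm_triangle_ineq[of "xs - c" "y - xs"] by (simp add: dist_norm norm_minus_commute)
        then have "norm (y - c) \<le> R" using y by (simp add: d_def)
        then show "u y ts - Bar eps a \<eta> c C 0 \<tau> y ts \<le> u xs ts - Bar eps a \<eta> c C 0 \<tau> xs ts"
          using maxA y xs b0 by blast
      qed
      show "\<forall>s. ts - d < s \<and> s \<le> ts \<longrightarrow> u xs s - Bar eps a \<eta> c C 0 \<tau> xs s \<le> u xs ts - Bar eps a \<eta> c C 0 \<tau> xs ts"
      proof (intro allI impI)
        fix s assume "ts - d < s \<and> s \<le> ts"
        then have "0 < s" "s \<le> T" using xs by (auto simp: d_def)
        then show "u xs s - Bar eps a \<eta> c C 0 \<tau> xs s \<le> u xs ts - Bar eps a \<eta> c C 0 \<tau> xs ts"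
          using maxA xs b0 by blast
      qed
    qed (use sx sc kpos deltapos xs taupos etapos Cd dpos in auto)
  qed
qed

end

context hsol
begin

lemma Mnn: "M \<ge> 0"
proof -
  have "(0::'a \<times> real) \<in> Omega_cl" by (simp add: Omega_cl_def)
  then have "\<bar>u 0 0\<bar> \<le> M" using Mb by blast
  then show ?thesis by simp
qed

lemma ubound: "x \<in> Omega_cl \<Longrightarrow> t \<ge> 0 \<Longrightarrow> u x t \<le> M"
  using Mb by fastforce

lemma Cex: "\<exists>C>0. C * eps > 2 * DIM('a \<times> real) \<and> C * delta > 2 * k * DIM('a)"
proof -
  define C where "C = 2 * DIM('a \<times> real) / eps + 2 * k * DIM('a) / delta + 1"
  have a: "2 * DIM('a \<times> real) / eps \<ge> 0" "2 * k * DIM('a) / delta \<ge> 0"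
    using epspos deltapos kpos by auto
  have "C * eps = 2 * DIM('a \<times> real) + (2 * k * DIM('a) / delta) * eps + eps"
    using epspos by (simp add: C_def field_simps)
  moreover have "(2 * k * DIM('a) / delta) * eps \<ge> 0" using a epspos by (intro mult_nonneg_nonneg) auto
  ultimately have 1: "C * eps > 2 * DIM('a \<times> real)" using epspos by linarith
  have "C * delta = (2 * DIM('a \<times> real) / eps) * delta + 2 * k * DIM('a) + delta"
    using deltapos by (simp add: C_def field_simps)
  moreover have "(2 * DIM('a \<times> real) / eps) * delta \<ge> 0" using a deltapos by (intro mult_nonneg_nonneg) auto
  ultimately have 2: "C * delta > 2 * k * DIM('a)" using deltapos by linarith
  have "C > 0" using a by (simp add: C_def)
  with 1 2 show ?thesis by blast
qed

lemma bottom_int: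
  assumes x: "x \<in> Omega" and e: "e > 0"
  shows "\<exists>d>0. \<forall>y s. dist y x < d \<and> 0 \<le> s \<and> s < d \<longrightarrow> y \<in> Omega \<and> u y s < e"
proof -
  have x0: "(x, 0::real) \<in> Omega \<times> {0..}" using x by simp
  obtain d0 where d0: "d0 > 0" and dH: "\<forall>p\<in>Omega \<times> {0..}. dist p (x, 0) < d0 \<longrightarrow>
      dist ((\<lambda>(x, t). u x t) p) ((\<lambda>(x, t). u x t) (x, 0)) < e"
    using C0 x0 e unfolding continuous_on_iff by blast
  have sx: "snd x > 0" using x by (simp add: Omega_def)
  define d where "d = min d0 (snd x) / 2"
  have dpos: "d > 0" using d0 sx by (simp add: d_def)
  show ?thesis
  proof (intro exI conjI allI impI)
    fix y s assume H: "dist y x < d \<and> 0 \<le> s \<and> s < d"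
    have "snd x - snd y \<le> dist y x"
      using dist_snd_le[of y x] by (simp add: dist_real_def)
    then have "snd y > 0" using H by (simp add: d_def)
    then show yO: "y \<in> Omega" by (simp add: Omega_def)
    have "dist (y, s) (x, 0) \<le> dist y x + dist s 0" by (rule dist_pair_le)
    also have "\<dots> < d0" using H by (simp add: d_def dist_real_def)
    finally have "dist (u y s) (u x 0) < e" using dH yO H by force
    then show "u y s < e" using I0 x by (simp add: dist_real_def)
  qed (rule dpos)
qed

lemma exp_bound: "4 * exp (-1::real) > 1"
proof -
  have "exp (1::real) < 4" using e_less_272 by simp
  then have "1 / exp (1::real) > 1 / 4" by (simp add: divide_strict_left_mono)
  then show ?thesis by (simp add: exp_minus field_simps)
qed

end

lemma aux3: "(X::real) \<noteq> 0 \<Longrightarrow> X * (e / (3 * X)) = e / 3"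
  by (simp add: field_simps)

context hsol
begin

lemma corner:
  assumes e: "e > 0"
  shows "\<exists>d>0. \<forall>x\<in>Omega. \<forall>t. 0 < t \<and> t < d \<and> dist x (y0, 0) < d \<longrightarrow> u x t < e"
proof -
  obtain C where Cpos: "C > 0" and Ce: "C * eps > 2 * DIM('a \<times> real)" and Cd: "C * delta > 2 * k * DIM('a)"
    using Cex by blast
  define c :: "'a \<times> real" where "c = (y0, 0)"
  define \<eta> where "\<eta> = M + 1"
  define \<beta> where "\<beta> = 4 * (M + 1)"
  have Mn: "M \<ge> 0" by (rule Mnn)
  have etapos: "\<eta> > 0" and betapos: "\<beta> > 0" using Mn by (auto simp: \<eta>_def \<beta>_def)
  define S :: "('a \<times> real) set" where "S = cball y0 1 \<times> {0..1}"
  have "uniformly_continuous_on S (\<lambda>(y, t). u (y, 0) t)"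
    by (rule compact_uniformly_continuous)
       (auto intro: continuous_on_subset[OF Cb] simp: S_def intro!: compact_Times)
  then obtain \<delta>1 where d1: "\<delta>1 > 0" and d1H: "\<forall>p\<in>S. \<forall>p'\<in>S. dist p' p < \<delta>1 \<longrightarrow>
      dist ((\<lambda>(y, t). u (y, 0) t) p') ((\<lambda>(y, t). u (y, 0) t) p) < e / 3"
  proof -
    have "e / 3 > 0" using e by simp
    then show ?thesis using that \<open>uniformly_continuous_on S (\<lambda>(y, t). u (y, 0) t)\<close>
      unfolding uniformly_continuous_on_def by blast
  qed
  have bnd: "u (y, 0) t < e / 3" if "norm (y - y0) \<le> 1" "0 \<le> t" "t \<le> 1" "t < \<delta>1" for y t
  proof -
    have "(y, 0) \<in> S" "(y, t) \<in> S" using that by (auto simp: S_def dist_norm norm_minus_commute)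
    moreover have "dist (y, t) (y, 0::real) < \<delta>1" using that by (simp add: dist_Pair_Pair dist_real_def)
    ultimately have "dist ((\<lambda>(y, t). u (y, 0) t) (y, t)) ((\<lambda>(y, t). u (y, 0) t) (y, 0)) < e / 3"
      using d1H by blast
    then have "dist (u (y, 0) t) (u (y, 0) 0) < e / 3" by simp
    then show ?thesis using Ib by (simp add: dist_real_def)
  qed
  define t1 where "t1 = min 1 (\<delta>1 / 2)"
  have t1: "t1 > 0" "t1 \<le> 1" "t1 < \<delta>1" using d1 by (auto simp: t1_def)
  have main: "u x t - Bar eps (e / 3) \<eta> c C \<beta> \<tau> x t \<le> 0"
    if tau: "\<tau> > 0" and H: "x \<in> Omega_cl" "norm (x - c) \<le> 1" "0 < t" "t \<le> t1" for \<tau> x t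
  proof -
    have "\<forall>x t. x \<in> Omega_cl \<and> norm (x - c) \<le> 1 \<and> 0 < t \<and> t \<le> t1 \<longrightarrow> u x t - Bar eps (e / 3) \<eta> c C \<beta> \<tau> x t \<le> 0"
    proof (rule maxp)
      show "snd c = 0" by (simp add: c_def)
      show "\<forall>x t. x \<in> Omega_cl \<and> norm (x - c) = 1 \<and> 0 < t \<and> t \<le> t1 \<longrightarrow> u x t - Bar eps (e / 3) \<eta> c C \<beta> \<tau> x t \<le> 0"
      proof (intro allI impI)
        fix x t assume H: "x \<in> Omega_cl \<and> norm (x - c) = 1 \<and> 0 < t \<and> t \<le> t1"
        have "Bar eps (e / 3) \<eta> c C \<beta> \<tau> x t \<ge> \<eta>"
        proof -
          have "\<eta> * ((norm (x - c))\<^sup>2 + C * t) \<ge> \<eta> * 1"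
            using H Cpos etapos by (intro mult_left_mono) auto
          moreover have "\<beta> * V eps \<tau> (snd x) t \<ge> 0" using betapos V_pos[of eps \<tau> "snd x" t] by simp
          ultimately show ?thesis using e by (simp add: Bar_def)
        qed
        moreover have "u x t \<le> M" using H ubound by simp
        ultimately show "u x t - Bar eps (e / 3) \<eta> c C \<beta> \<tau> x t \<le> 0" by (simp add: \<eta>_def)
      qed
      show "\<beta> \<noteq> 0 \<longrightarrow> (\<forall>x t. x \<in> Omega_cl \<and> snd x = 0 \<and> norm (x - c) \<le> 1 \<and> 0 < t \<and> t \<le> t1 \<longrightarrow> u x t - Bar eps (e / 3) \<eta> c C \<beta> \<tau> x t \<le> 0)"
      proof (intro impI allI)
        fix x t assume H: "x \<in> Omega_cl \<and> snd x = 0 \<and> norm (x - c) \<le> 1 \<and> 0 < t \<and> t \<le> t1"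
        have xe: "x = (fst x, 0)" using H by (simp add: prod_eq_iff)
        have "norm (fst x - y0) \<le> norm (x - c)"
          using norm_fst_le[of "fst x - y0" "snd x"] by (cases x) (simp add: c_def)
        then have "u (fst x, 0) t < e / 3" using H t1 by (intro bnd) auto
        then have "u x t < e / 3" using xe by metis
        moreover have "Bar eps (e / 3) \<eta> c C \<beta> \<tau> x t \<ge> e / 3"
        proof -
          have "Bar eps 0 \<eta> c C \<beta> \<tau> x t \<ge> 0" using etapos Cpos H betapos by (intro Bar_nonneg) auto
          then show ?thesis by (simp add: Bar_def)
        qed
        ultimately show "u x t - Bar eps (e / 3) \<eta> c C \<beta> \<tau> x t \<le> 0" by simp
      qed
      show "\<forall>e'>0. \<forall>x\<in>Omega_cl. norm (x - c) \<le> 1 \<longrightarrow> (\<exists>d>0. \<forall>y s. y \<in> Omega_cl \<and> norm (y - c) \<le> 1 \<and> 0 < s \<and> s \<le> t1 \<and> dist y x < d \<and> s < d \<longrightarrow> u y s - Bar eps (e / 3) \<eta> c C \<beta> \<tau> y s < e')"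
      proof (intro allI impI ballI)
        fix e' :: real and x assume e': "e' > 0" and x: "x \<in> Omega_cl" and nx: "norm (x - c) \<le> 1"
        have Bnn: "Bar eps (e / 3) \<eta> c C \<beta> \<tau> y s \<ge> 0" if "s \<ge> 0" for y s
          using e etapos Cpos that betapos by (intro Bar_nonneg) auto
        show "\<exists>d>0. \<forall>y s. y \<in> Omega_cl \<and> norm (y - c) \<le> 1 \<and> 0 < s \<and> s \<le> t1 \<and> dist y x < d \<and> s < d \<longrightarrow> u y s - Bar eps (e / 3) \<eta> c C \<beta> \<tau> y s < e'"
        proof (cases "snd x > 0")
          case True
          then have "x \<in> Omega" by (simp add: Omega_def)
          then obtain d where d: "d > 0" "\<forall>y s. dist y x < d \<and> 0 \<le> s \<and> s < d \<longrightarrow> y \<in> Omega \<and> u y s < e'"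
            using bottom_int e' by blast
          show ?thesis
          proof (intro exI conjI allI impI)
            fix y s assume "y \<in> Omega_cl \<and> norm (y - c) \<le> 1 \<and> 0 < s \<and> s \<le> t1 \<and> dist y x < d \<and> s < d"
            then have "u y s < e'" "s \<ge> 0" using d(2)[rule_format, of y s] by auto
            then show "u y s - Bar eps (e / 3) \<eta> c C \<beta> \<tau> y s < e'" using Bnn[of s y] by linarith
          qed (rule d(1))
        next
          case False
          then have sx: "snd x = 0" using x by (simp add: Omega_cl_def)
          define d where "d = min \<tau> (min 1 (2 * \<tau> / (eps + 1)))"
          have dpos: "d > 0" using tau epspos by (simp add: d_def)
          show ?thesis
          proof (intro exI conjI allI impI)
            fix y s assume H: "y \<in> Omega_cl \<and> norm (y - c) \<le> 1 \<and> 0 < s \<and> s \<le> t1 \<and> dist y x < d \<and> s < d"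
            have "\<bar>snd y\<bar> \<le> dist y x" using dist_snd_le[of y x] sx by (simp add: dist_real_def)
            then have sy: "\<bar>snd y\<bar> < d" using H by simp
            have "eps * (snd y)\<^sup>2 \<le> eps * d"
            proof -
              have a1: "\<bar>snd y\<bar> \<le> 1" using sy by (simp add: d_def)
              have "(snd y)\<^sup>2 = \<bar>snd y\<bar> * \<bar>snd y\<bar>" by (simp add: power2_eq_square)
              also have "\<dots> \<le> \<bar>snd y\<bar>" by (rule mult_right_le_one_le) (use a1 in auto)
              finally have "(snd y)\<^sup>2 \<le> \<bar>snd y\<bar>" .
              also have "\<dots> \<le> d" using sy by simp
              finally show ?thesis using epspos by simp
            qed
            also have "\<dots> \<le> eps * (2 * \<tau> / (eps + 1))" using epspos by (intro mult_left_mono) (auto simp: d_def)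
            also have "\<dots> \<le> 2 * \<tau>"
              using epspos tau by (simp add: field_simps)
            finally have ey: "eps * (snd y)\<^sup>2 \<le> 2 * \<tau>" .
            have "V eps \<tau> (snd y) s \<ge> exp (-1)"
              using H ey tau epspos by (intro V_lower) (auto simp: d_def)
            then have "\<beta> * V eps \<tau> (snd y) s \<ge> \<beta> * exp (-1)" using betapos by simp
            moreover have "\<beta> * exp (-1) > M + 1"
            proof -
              have "(M + 1) * (4 * exp (-1)) > (M + 1) * 1"
                using exp_bound Mn by (intro mult_strict_left_mono) auto
              then show ?thesis by (simp add: \<beta>_def algebra_simps)
            qed
            moreover have "Bar eps (e / 3) \<eta> c C 0 \<tau> y s \<ge> 0"
              using e etapos Cpos H by (intro Bar_nonneg) auto
            moreover have "Bar eps (e / 3) \<eta> c C \<beta> \<tau> y s = Bar eps (e / 3) \<eta> c C 0 \<tau> y s + \<beta> * V eps \<tau> (snd y) s"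
              by (simp add: Bar_def)
            moreover have "u y s \<le> M" using H ubound by simp
            ultimately show "u y s - Bar eps (e / 3) \<eta> c C \<beta> \<tau> y s < e'" using e' by linarith
          qed (rule dpos)
        qed
      qed
    qed (use t1 etapos betapos tau e Cpos Ce Cd in auto)
    then show ?thesis using H by blast
  qed
  define d where "d = min t1 (e / (3 * (\<eta> * (1 + C))))"
  have dpos: "d > 0" using t1 e etapos Cpos by (simp add: d_def)
  have d1': "d \<le> 1" using t1 by (simp add: d_def)
  have dle: "\<eta> * (1 + C) * d \<le> e / 3"
  proof -
    have "d \<le> e / (3 * (\<eta> * (1 + C)))" by (simp add: d_def)
    then have "\<eta> * (1 + C) * d \<le> \<eta> * (1 + C) * (e / (3 * (\<eta> * (1 + C))))"
      using etapos Cpos by (intro mult_left_mono) auto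
    also have "\<dots> = e / 3"
      using aux3[of "\<eta> * (1 + C)" e] etapos Cpos by simp
    finally show ?thesis .
  qed
  show ?thesis
  proof (intro exI conjI ballI allI impI)
    fix x t assume x: "x \<in> Omega" and H: "0 < t \<and> t < d \<and> dist x (y0, 0) < d"
    define q where "q = e / (3 * \<beta>)"
    have qpos: "q > 0" using e betapos by (simp add: q_def)
    define \<tau> where "\<tau> = t * q\<^sup>2"
    have taupos: "\<tau> > 0" using H qpos by (simp add: \<tau>_def)
    have nxc: "norm (x - c) < d" using H by (simp add: c_def dist_norm)
    have "u x t - Bar eps (e / 3) \<eta> c C \<beta> \<tau> x t \<le> 0"
    proof -
      have xcl: "x \<in> Omega_cl" using x Omega_sub by blast
      have n1: "norm (x - c) \<le> 1" using nxc d1' by simp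
      have tle: "t \<le> t1" using H by (simp add: d_def)
      show ?thesis using main[OF taupos xcl n1 _ tle] H by simp
    qed
    moreover have "\<beta> * V eps \<tau> (snd x) t \<le> e / 3"
    proof -
      have "V eps \<tau> (snd x) t \<le> q" unfolding \<tau>_def using H qpos epspos by (intro V_small) auto
      then have "\<beta> * V eps \<tau> (snd x) t \<le> \<beta> * q" using betapos by simp
      also have "\<dots> = e / 3" using betapos by (simp add: q_def)
      finally show ?thesis .
    qed
    moreover have "\<eta> * ((norm (x - c))\<^sup>2 + C * t) < e / 3"
    proof -
      have "(norm (x - c))\<^sup>2 \<le> norm (x - c)"
        unfolding power2_eq_square by (rule mult_right_le_one_le) (use nxc d1' in auto)
      then have "(norm (x - c))\<^sup>2 < d" using nxc by linarith
      moreover have "C * t \<le> C * d" using H Cpos by simp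
      ultimately have "(norm (x - c))\<^sup>2 + C * t < (1 + C) * d" by (simp add: algebra_simps)
      then have "\<eta> * ((norm (x - c))\<^sup>2 + C * t) < \<eta> * ((1 + C) * d)"
        using etapos by simp
      then show ?thesis using dle by (simp add: algebra_simps)
    qed
    ultimately show "u x t < e" by (simp add: Bar_def)
  qed (rule dpos)
qed

end

context hsol
begin

lemma bound_eta:
  assumes x: "x \<in> Omega_cl" and t: "t > 0" and eta: "\<eta> > 0"
    and that: "C > 0" "C * eps > 2 * DIM('a \<times> real)" "C * delta > 2 * k * DIM('a)"
  shows "u x t \<le> \<eta> * ((norm x)\<^sup>2 + C * t)"
proof -
  have Mn: "M \<ge> 0" by (rule Mnn)
  define R where "R = norm x + M / \<eta> + 1"
  have R1: "R \<ge> 1" using Mn eta by (simp add: R_def)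
  have RM: "\<eta> * R\<^sup>2 > M"
  proof -
    have "norm x \<ge> 0" by simp
    then have "R > M / \<eta>" unfolding R_def by linarith
    moreover have "R\<^sup>2 \<ge> R" using R1 by (simp add: power2_eq_square)
    ultimately have "R\<^sup>2 > M / \<eta>" by linarith
    then show ?thesis using eta by (simp add: pos_divide_less_eq mult.commute)
  qed
  have "\<forall>y s. y \<in> Omega_cl \<and> norm (y - 0) \<le> R \<and> 0 < s \<and> s \<le> t \<longrightarrow> u y s - Bar eps 0 \<eta> 0 C 0 1 y s \<le> 0"
  proof (rule maxp)
    show "\<forall>y s. y \<in> Omega_cl \<and> norm (y - 0) = R \<and> 0 < s \<and> s \<le> t \<longrightarrow> u y s - Bar eps 0 \<eta> 0 C 0 1 y s \<le> 0"
    proof (intro allI impI)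
      fix y :: "'a \<times> real" and s :: real assume H: "y \<in> Omega_cl \<and> norm (y - 0) = R \<and> 0 < s \<and> s \<le> t"
      have "Bar eps 0 \<eta> 0 C 0 1 y s = \<eta> * (R\<^sup>2 + C * s)" using H by (simp add: Bar_def)
      also have "\<dots> \<ge> \<eta> * R\<^sup>2" using eta that H by simp
      finally have "Bar eps 0 \<eta> 0 C 0 1 y s > M" using RM by linarith
      moreover have "u y s \<le> M" using H ubound by simp
      ultimately show "u y s - Bar eps 0 \<eta> 0 C 0 1 y s \<le> 0" by simp
    qed
    show "\<forall>e>0. \<forall>x\<in>Omega_cl. norm (x - 0) \<le> R \<longrightarrow> (\<exists>d>0. \<forall>y s. y \<in> Omega_cl \<and> norm (y - 0) \<le> R \<and> 0 < s \<and> s \<le> t \<and> dist y x < d \<and> s < d \<longrightarrow> u y s - Bar eps 0 \<eta> 0 C 0 1 y s < e)"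
    proof (intro allI impI ballI)
      fix e :: real and x :: "'a \<times> real" assume e: "e > 0" and x: "x \<in> Omega_cl" and nx: "norm (x - 0) \<le> R"
      have Bnn: "Bar eps 0 \<eta> 0 C 0 1 y s \<ge> 0" if "s \<ge> 0" for y :: "'a \<times> real" and s
        using eta that \<open>C > 0\<close> by (intro Bar_nonneg) auto
      show "\<exists>d>0. \<forall>y s. y \<in> Omega_cl \<and> norm (y - 0) \<le> R \<and> 0 < s \<and> s \<le> t \<and> dist y x < d \<and> s < d \<longrightarrow> u y s - Bar eps 0 \<eta> 0 C 0 1 y s < e"
      proof (cases "snd x > 0")
        case True
        then have "x \<in> Omega" by (simp add: Omega_def)
        then obtain d where d: "d > 0" "\<forall>y s. dist y x < d \<and> 0 \<le> s \<and> s < d \<longrightarrow> y \<in> Omega \<and> u y s < e"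
          using bottom_int e by blast
        show ?thesis
        proof (intro exI conjI allI impI)
          fix y s assume "y \<in> Omega_cl \<and> norm (y - 0) \<le> R \<and> 0 < s \<and> s \<le> t \<and> dist y x < d \<and> s < d"
          then have "u y s < e" "s \<ge> 0" using d(2)[rule_format, of y s] by auto
          then show "u y s - Bar eps 0 \<eta> 0 C 0 1 y s < e" using Bnn[of s y] by linarith
        qed (rule d(1))
      next
        case False
        then have sx: "snd x = 0" using x by (simp add: Omega_cl_def)
        have xe: "x = (fst x, 0)" using sx by (simp add: prod_eq_iff)
        obtain d1 where d1: "d1 > 0" "\<forall>z\<in>Omega. \<forall>s. 0 < s \<and> s < d1 \<and> dist z (fst x, 0) < d1 \<longrightarrow> u z s < e"
          using corner[OF e, of "fst x"] by blast
        have p0: "(fst x, 0::real) \<in> UNIV \<times> {0..}" by simp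
        obtain d2 where d2: "d2 > 0" and d2H: "\<forall>p\<in>UNIV \<times> {0..}. dist p (fst x, 0) < d2 \<longrightarrow>
            dist ((\<lambda>(y, t). u (y, 0) t) p) ((\<lambda>(y, t). u (y, 0) t) (fst x, 0)) < e"
          using Cb p0 e unfolding continuous_on_iff by blast
        define d where "d = min d1 d2 / 2"
        have dpos: "d > 0" using d1 d2 by (simp add: d_def)
        show ?thesis
        proof (intro exI conjI allI impI)
          fix y s assume H: "y \<in> Omega_cl \<and> norm (y - 0) \<le> R \<and> 0 < s \<and> s \<le> t \<and> dist y x < d \<and> s < d"
          have "u y s < e"
          proof (cases "snd y > 0")
            case True
            then have "y \<in> Omega" by (simp add: Omega_def)
            moreover have "dist y (fst x, 0) < d1"
            proof -
              have "d \<le> d1" using d1 d2 by (simp add: d_def)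
              then show ?thesis using H xe by simp
            qed
            ultimately show ?thesis using d1 H by (simp add: d_def)
          next
            case False
            then have sy: "snd y = 0" using H by (simp add: Omega_cl_def)
            have ye: "y = (fst y, 0)" using sy by (simp add: prod_eq_iff)
            have "dist (fst y, s) (fst x, 0) \<le> dist (fst y) (fst x) + dist s 0" by (rule dist_pair_le)
            also have "\<dots> \<le> dist y x + s" using dist_fst_le[of y x] H by (simp add: dist_real_def)
            also have "\<dots> < d2" using H by (simp add: d_def)
            finally have "dist (fst y, s) (fst x, 0) < d2" .
            moreover have "(fst y, s) \<in> UNIV \<times> {0..}" using H by simp
            ultimately have "dist (u (fst y, 0) s) (u (fst x, 0) 0) < e" using d2H by fastforce
            then have "u (fst y, 0) s < e" using Ib by (simp add: dist_real_def)
            then show ?thesis using ye by metis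
          qed
          then show "u y s - Bar eps 0 \<eta> 0 C 0 1 y s < e" using Bnn[of s y] H by linarith
        qed (rule dpos)
      qed
    qed
  qed (use eta t R1 that in auto)
  moreover have "norm (x - 0) \<le> R" using Mn eta by (simp add: R_def)
  ultimately have "u x t - Bar eps 0 \<eta> 0 C 0 1 x t \<le> 0" using x t by blast
  then show ?thesis by (simp add: Bar_def)
qed

end

context hsol
begin

lemma nonpos:
  assumes x: "x \<in> Omega_cl" and t: "t > 0"
  shows "u x t \<le> 0"
proof (rule ccontr)
  assume "\<not> ?thesis"
  then have up: "u x t > 0" by simp
  obtain C where C: "C > 0" "C * eps > 2 * DIM('a \<times> real)" "C * delta > 2 * k * DIM('a)"
    using Cex by blast
  define P where "P = (norm x)\<^sup>2 + C * t"
  have Pn: "P \<ge> 0" using C t by (simp add: P_def)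
  define \<eta> where "\<eta> = u x t / (2 * (P + 1))"
  have eta: "\<eta> > 0" using up Pn by (simp add: \<eta>_def)
  have "u x t \<le> \<eta> * P" unfolding P_def by (rule bound_eta[OF x t eta C])
  also have "\<eta> * P = u x t * (P / (2 * (P + 1)))" by (simp add: \<eta>_def)
  also have "\<dots> < u x t * 1"
    using up Pn by (intro mult_strict_left_mono) (auto simp: divide_less_eq)
  finally show False by simp
qed

end

lemma lap_neg: "lap (- H) = - lap H"
  by (simp add: lap_def sum_negf blinfun.minus_left)

lemma lap_tan_neg: "lap_tan (- H) = - lap_tan H"
  by (simp add: lap_tan_def sum_negf blinfun.minus_left)

lemma hsol_neg:
  assumes "hsol u Du D2u ut eps delta k M"
  shows "hsol (\<lambda>x t. - u x t) (\<lambda>x t. - Du x t) (\<lambda>x t. - D2u x t) (\<lambda>x t. - ut x t) eps delta k M"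
proof -
  interpret hsol u Du D2u ut eps delta k M by (rule assms)
  have neg: "blinfun_apply (- L) = (\<lambda>h. - blinfun_apply L h)" for L :: "'x::real_normed_vector \<Rightarrow>\<^sub>L 'y::real_normed_vector"
    by (rule ext) (simp add: blinfun.minus_left)
  show ?thesis
  proof
    show "\<forall>x\<in>Omega_cl. \<forall>t>0. ((\<lambda>y. - u y t) has_derivative blinfun_apply (- Du x t)) (at x within Omega_cl)"
      using D1 unfolding neg by (auto intro: has_derivative_minus)
    show "\<forall>x\<in>Omega_cl. \<forall>t>0. ((\<lambda>s. - u x s) has_real_derivative - ut x t) (at t)"
      using Dt by (auto intro: DERIV_minus)
    show "\<forall>x\<in>Omega. \<forall>t>0. ((\<lambda>y. - Du y t) has_derivative blinfun_apply (- D2u x t)) (at x within Omega_cl)"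
      using D2i unfolding neg by (auto intro: has_derivative_minus)
    show "k > 0 \<longrightarrow> (\<forall>y. \<forall>t>0. ((\<lambda>z. - Du z t) has_derivative blinfun_apply (- D2u (y, 0) t)) (at (y, 0) within Omega_cl))"
      using D2b unfolding neg by (auto intro: has_derivative_minus)
    show "continuous_on (Omega_cl \<times> {0<..}) (\<lambda>(x, t). - u x t)"
      using continuous_on_minus[OF Cu] by (simp add: case_prod_beta)
    show "continuous_on (Omega \<times> {0..}) (\<lambda>(x, t). - u x t)"
      using continuous_on_minus[OF C0] by (simp add: case_prod_beta)
    show "continuous_on (UNIV \<times> {0..}) (\<lambda>(y, t). - u (y, 0) t)"
      using continuous_on_minus[OF Cb] by (simp add: case_prod_beta)
    show "\<forall>x\<in>Omega. \<forall>t>0. eps * - ut x t - lap (- D2u x t) = 0"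
      using Eq by (simp add: lap_neg)
    show "\<forall>y. \<forall>t>0. delta * - ut (y, 0) t - k * lap_tan (- D2u (y, 0) t) - blinfun_apply (- Du (y, 0) t) (0, 1) = 0"
      using Eqb by (simp add: lap_tan_neg algebra_simps blinfun.minus_left)
  qed (use epspos deltapos kpos I0 Ib Mb in auto)
qed

lemma exists_hsol:
  fixes u :: "('a::euclidean_space \<times> real) \<Rightarrow> real \<Rightarrow> real"
    and eps delta k :: real
  assumes "eps > 0" and "delta > 0" and "k \<ge> 0"
    and "if k > 0 then classical_HDD eps delta k u (\<lambda>_. 0) (\<lambda>_. 0)
         else classical_HD eps delta u (\<lambda>_. 0) (\<lambda>_. 0)"
    and Mb: "\<forall>x\<in>Omega_cl. \<forall>t\<ge>0. \<bar>u x t\<bar> \<le> M"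
  shows "\<exists>Du D2u ut. hsol u Du D2u ut eps delta k M"
proof (cases "k > 0")
  case True
  then have "classical_HDD eps delta k u (\<lambda>_. 0) (\<lambda>_. 0)" using assms(4) by simp
  then obtain Du D2u ut where
    A: "\<forall>x\<in>Omega_cl. \<forall>t>0.
          ((\<lambda>y. u y t) has_derivative blinfun_apply (Du x t)) (at x within Omega_cl) \<and>
          ((\<lambda>y. Du y t) has_derivative blinfun_apply (D2u x t)) (at x within Omega_cl) \<and>
          ((\<lambda>s. u x s) has_real_derivative ut x t) (at t)"
    and Cu: "continuous_on (Omega_cl \<times> {0<..}) (\<lambda>(x, t). u x t)"
    and C0: "continuous_on (Omega \<times> {0..}) (\<lambda>(x, t). u x t)"
    and Cb: "continuous_on (UNIV \<times> {0..}) (\<lambda>(y, t). u (y, 0) t)"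
    and Eq: "\<forall>x\<in>Omega. \<forall>t>0. eps * ut x t - lap (D2u x t) = 0"
    and Eqb: "\<forall>y. \<forall>t>0. delta * ut (y, 0) t - k * lap_tan (D2u (y, 0) t)
                   - blinfun_apply (Du (y, 0) t) (0, 1) = 0"
    and I0: "\<forall>x\<in>Omega. u x 0 = 0" and Ib: "\<forall>y. u (y, 0) 0 = 0"
    unfolding classical_HDD_def by blast
  have y0: "(y, 0::real) \<in> Omega_cl" for y :: 'a by (simp add: Omega_cl_def)
  have "hsol u Du D2u ut eps delta k M"
  proof
    show "\<forall>x\<in>Omega. \<forall>t>0. ((\<lambda>y. Du y t) has_derivative blinfun_apply (D2u x t)) (at x within Omega_cl)"
      using A Omega_sub by blast
    show "k > 0 \<longrightarrow> (\<forall>y. \<forall>t>0. ((\<lambda>z. Du z t) has_derivative blinfun_apply (D2u (y, 0) t)) (at (y, 0) within Omega_cl))"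
      using A y0 by blast
  qed (use assms(1-3) A Cu C0 Cb Eq Eqb I0 Ib Mb in blast)+
  then show ?thesis by blast
next
  case False
  then have k0: "k = 0" using assms(3) by simp
  have "classical_HD eps delta u (\<lambda>_. 0) (\<lambda>_. 0)" using assms(4) False by simp
  then obtain Du D2u ut where
    A: "\<forall>x\<in>Omega_cl. \<forall>t>0.
          ((\<lambda>y. u y t) has_derivative blinfun_apply (Du x t)) (at x within Omega_cl) \<and>
          ((\<lambda>s. u x s) has_real_derivative ut x t) (at t)"
    and Cu: "continuous_on (Omega_cl \<times> {0<..}) (\<lambda>(x, t). u x t)"
    and A2: "\<forall>x\<in>Omega. \<forall>t>0.
          ((\<lambda>y. Du y t) has_derivative blinfun_apply (D2u x t)) (at x)"
    and C0: "continuous_on (Omega \<times> {0..}) (\<lambda>(x, t). u x t)"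
    and Cb: "continuous_on (UNIV \<times> {0..}) (\<lambda>(y, t). u (y, 0) t)"
    and Eq: "\<forall>x\<in>Omega. \<forall>t>0. eps * ut x t - lap (D2u x t) = 0"
    and Eqb: "\<forall>y. \<forall>t>0. delta * ut (y, 0) t - blinfun_apply (Du (y, 0) t) (0, 1) = 0"
    and I0: "\<forall>x\<in>Omega. u x 0 = 0" and Ib: "\<forall>y. u (y, 0) 0 = 0"
    unfolding classical_HD_def by blast
  have "hsol u Du D2u ut eps delta k M"
  proof
    show "\<forall>x\<in>Omega. \<forall>t>0. ((\<lambda>y. Du y t) has_derivative blinfun_apply (D2u x t)) (at x within Omega_cl)"
      using A2 by (blast intro: has_derivative_at_withinI)
    show "k > 0 \<longrightarrow> (\<forall>y. \<forall>t>0. ((\<lambda>z. Du z t) has_derivative blinfun_apply (D2u (y, 0) t)) (at (y, 0) within Omega_cl))"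
      using k0 by simp
    show "\<forall>y. \<forall>t>0. delta * ut (y, 0) t - k * lap_tan (D2u (y, 0) t) - blinfun_apply (Du (y, 0) t) (0, 1) = 0"
      using Eqb k0 by simp
  qed (use assms(1-3) A Cu C0 Cb Eq I0 Ib Mb in blast)+
  then show ?thesis by blast
qed

theorem proposition2p1:
  fixes u :: "('a::euclidean_space \<times> real) \<Rightarrow> real \<Rightarrow> real"
    and eps delta k :: real
  assumes "eps > 0" and "delta > 0" and "k \<ge> 0"
    and "if k > 0 then classical_HDD eps delta k u (\<lambda>_. 0) (\<lambda>_. 0)
         else classical_HD eps delta u (\<lambda>_. 0) (\<lambda>_. 0)"
    and "\<exists>M. \<forall>x\<in>Omega_cl. \<forall>t\<ge>0. \<bar>u x t\<bar> \<le> M"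
    and "\<forall>T>0. \<exists>\<gamma>>0. \<forall>R>1.
           (\<integral>\<^sup>+ z. indicator {(x, t). x \<in> Omega \<and> R / 2 \<le> norm x \<and> norm x < R \<and> 0 < t \<and> t < T} z
                    * ennreal ((u (fst z) (snd z))\<^sup>2) \<partial>lborel)
         + (\<integral>\<^sup>+ z. indicator {(y::'a, t). R / 2 \<le> norm y \<and> norm y < R \<and> 0 < t \<and> t < T} z
                    * ennreal ((u (fst z, 0) (snd z))\<^sup>2) \<partial>lborel)
         \<le> ennreal (exp (\<gamma> * R\<^sup>2))"
  shows "\<forall>x\<in>Omega_cl. \<forall>t>0. u x t = 0"
proof -
  obtain M where Mb: "\<forall>x\<in>Omega_cl. \<forall>t\<ge>0. \<bar>u x t\<bar> \<le> M" using assms(5) by blast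
  obtain Du D2u ut where hs: "hsol u Du D2u ut eps delta k M"
    using exists_hsol[OF assms(1-4) Mb] by blast
  have hn: "hsol (\<lambda>x t. - u x t) (\<lambda>x t. - Du x t) (\<lambda>x t. - D2u x t) (\<lambda>x t. - ut x t) eps delta k M"
    by (rule hsol_neg[OF hs])
  show ?thesis
  proof (intro ballI allI impI)
    fix x :: "'a \<times> real" and t :: real assume x: "x \<in> Omega_cl" and t: "0 < t"
    have "u x t \<le> 0" by (rule hsol.nonpos[OF hs x t])
    moreover have "- u x t \<le> 0" using hsol.nonpos[OF hn x t] .
    ultimately show "u x t = 0" by simp
  qed
qed


end
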